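(* Let $n\ge0$ and let $H_n$ be the pyrene system with $n$ pyrene fragments. Then $$Af(H_n,x)=x^{n}\sum_{l=0}^{2n}\sum_{i=\lceil\frac{l+2n}{4}\rceil}^{n}\sum_{j=\lceil\frac{l}{2}\rceil}^{l}(-1)^{n-i}2^{2i-n}\binom{i}{2i-n}\binom{2i-n}{j}\binom{j}{l-j}x^{l}.$$
   Context: Pyrene system: draw the hexagonal lattice so that every hexagon has two vertical sides; horizontally adjacent hexagons then share a vertical edge. For $n\ge1$, $H_n$ is the hexagonal system (the plane graph formed by the vertices and edges of the following $4n$ hexagons) consisting of a horizontal linear row of $2n$ hexagons $h_{1,1},h_{1,2},\dots,h_{n,1},h_{n,2}$, consecutive ones sharing a vertical edge, together with, for each $i$, a hexagon $s_{i,1}$ directly above and a hexagon $s_{i,2}$ directly below the common edge of $h_{i,1}$ and $h_{i,2}$ (each sharing an edge with both $h_{i,1}$ and $h_{i,2}$). $H_0$ is the null graph (anti-forcing polynomial $1$). For a perfect matching $M$ of $G$, an anti-forcing set of $M$ is a set $S\subseteq E(G)\setminus M$ such that $M$ is the unique perfect matching of $G-S$; the anti-forcing number $af(G,M)$ is the minimum size of an anti-forcing set of $M$. The anti-forcing polynomial is $Af(G,x)=\sum_{M\in\mathcal{M}(G)}x^{af(G,M)}$, where $\mathcal{M}(G)$ is the set of perfect matchings of $G$. Binomial coefficients $\binom{a}{b}$ are $0$ when $b<0$ or $b>a$. *)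

theory Defs
  imports "HOL-Computational_Algebra.Polynomial"
begin

definition perfect_matching :: "'a set \<Rightarrow> 'a set set \<Rightarrow> 'a set set \<Rightarrow> bool" where
  "perfect_matching V E M \<longleftrightarrow> M \<subseteq> E \<and> (\<forall>v\<in>V. \<exists>!e. e \<in> M \<and> v \<in> e)"

definition anti_forcing_set :: "'a set \<Rightarrow> 'a set set \<Rightarrow> 'a set set \<Rightarrow> 'a set set \<Rightarrow> bool" where
  "anti_forcing_set V E M S \<longleftrightarrow> S \<subseteq> E - M \<and>
     {M'. perfect_matching V (E - S) M'} = {M}"

definition anti_forcing_number :: "'a set \<Rightarrow> 'a set set \<Rightarrow> 'a set set \<Rightarrow> nat" where
  "anti_forcing_number V E M = (LEAST k. \<exists>S. anti_forcing_set V E M S \<and> finite S \<and> card S = k)"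

definition anti_forcing_poly :: "'a set \<Rightarrow> 'a set set \<Rightarrow> int poly" where
  "anti_forcing_poly V E = (\<Sum>M \<in> {M. perfect_matching V E M}. monom 1 (anti_forcing_number V E M))"

text \<open>The hexagonal lattice with vertical hexagon sides is drawn as a brick wall
on integer points: the hexagon with lower-left corner (x,y) (x+y even) has vertices
(x,y),(x+1,y),(x+2,y),(x,y+1),(x+1,y+1),(x+2,y+1), vertical sides at x and x+2.\<close>

definition hexagon :: "int \<times> int \<Rightarrow> (int \<times> int) set set" where
  "hexagon p = (case p of (x, y) \<Rightarrow>
     {{(x,y),(x+1,y)}, {(x+1,y),(x+2,y)}, {(x+2,y),(x+2,y+1)},
      {(x+1,y+1),(x+2,y+1)}, {(x,y+1),(x+1,y+1)}, {(x,y),(x,y+1)}})"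

text \<open>Hexagons of H_n (i = 0..n-1 indexes the fragments): h_{i,1} at (4i,0),
h_{i,2} at (4i+2,0) (sharing the vertical edge at x = 4i+2), s_{i,1} at (4i+1,1)
directly above that edge and s_{i,2} at (4i+1,-1) directly below it.\<close>
definition pyrene_hexagons :: "nat \<Rightarrow> (int \<times> int) set" where
  "pyrene_hexagons n = (\<Union>i\<in>{..<n}.
     {(4 * int i, 0), (4 * int i + 2, 0), (4 * int i + 1, 1), (4 * int i + 1, -1)})"

definition pyrene_edges :: "nat \<Rightarrow> (int \<times> int) set set" where
  "pyrene_edges n = \<Union> (hexagon ` pyrene_hexagons n)"

definition pyrene_vertices :: "nat \<Rightarrow> (int \<times> int) set" where
  "pyrene_vertices n = \<Union> (pyrene_edges n)"

end

theory Submission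
  imports Defs
begin

datatype lv = T1 | T2 | T3 | U1 | U2 | U3 | D1 | D2 | D3 | B1 | B2 | B3

datatype node = In nat lv | Bd nat bool

datatype le = T12 | T23 | T1U | T3U | B12 | B23 | B1D | B3D
  | UL | U12 | U23 | UR | DL | D12 | D23 | DR | MR

fun ends :: "nat \<Rightarrow> le \<Rightarrow> node \<times> node" where
  "ends i T12 = (In i T1, In i T2)"
| "ends i T23 = (In i T2, In i T3)"
| "ends i T1U = (In i T1, In i U1)"
| "ends i T3U = (In i T3, In i U3)"
| "ends i B12 = (In i B1, In i B2)"
| "ends i B23 = (In i B2, In i B3)"
| "ends i B1D = (In i B1, In i D1)"
| "ends i B3D = (In i B3, In i D3)"
| "ends i UL = (Bd i True, In i U1)"
| "ends i U12 = (In i U1, In i U2)"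
| "ends i U23 = (In i U2, In i U3)"
| "ends i UR = (In i U3, Bd (Suc i) True)"
| "ends i DL = (Bd i False, In i D1)"
| "ends i D12 = (In i D1, In i D2)"
| "ends i D23 = (In i D2, In i D3)"
| "ends i DR = (In i D3, Bd (Suc i) False)"
| "ends i MR = (In i U2, In i D2)"

definition ed :: "nat \<Rightarrow> le \<Rightarrow> node set" where
  "ed i l = {fst (ends i l), snd (ends i l)}"

definition rung :: "nat \<Rightarrow> node set" where
  "rung j = {Bd j False, Bd j True}"

definition AE :: "nat \<Rightarrow> node set set" where
  "AE n = (\<Union>i<n. range (ed i)) \<union> rung ` {..n}"

definition AV :: "nat \<Rightarrow> node set" where
  "AV n = \<Union> (AE n)"

fun lvx :: "lv \<Rightarrow> int \<times> int" where
  "lvx T1 = (1,2)" | "lvx T2 = (2,2)" | "lvx T3 = (3,2)"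
| "lvx U1 = (1,1)" | "lvx U2 = (2,1)" | "lvx U3 = (3,1)"
| "lvx D1 = (1,0)" | "lvx D2 = (2,0)" | "lvx D3 = (3,0)"
| "lvx B1 = (1,-1)" | "lvx B2 = (2,-1)" | "lvx B3 = (3,-1)"

fun vtx :: "node \<Rightarrow> int \<times> int" where
  "vtx (In i l) = (4 * int i + fst (lvx l), snd (lvx l))"
| "vtx (Bd j b) = (4 * int j, if b then 1 else 0)"

lemma lvx_range: "1 \<le> fst (lvx l) \<and> fst (lvx l) \<le> 3"
  by (cases l) auto

lemma no4: "(4::int) * a + c = 4 * b \<Longrightarrow> 1 \<le> c \<Longrightarrow> c \<le> 3 \<Longrightarrow> False"
  by presburger

lemma eq4: "(4::int) * a + c = 4 * b + d \<Longrightarrow> 1 \<le> c \<Longrightarrow> c \<le> 3 \<Longrightarrow> 1 \<le> d \<Longrightarrow> d \<le> 3 \<Longrightarrow> a = b"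
  by presburger

lemma le_UNIV: "(UNIV::le set) = {T12 , T23 , T1U , T3U , B12 , B23 , B1D , B3D
  , UL , U12 , U23 , UR , DL , D12 , D23 , DR , MR}"
  by (rule set_eqI, case_tac x, auto)

lemma lvx_inj: "lvx l = lvx l' \<Longrightarrow> l = l'"
  by (cases l; cases l') auto

lemma inj_vtx: "inj vtx"
proof (rule injI)
  fix a b assume h: "vtx a = vtx b"
  show "a = b"
  proof (cases a)
    case (In i l)
    then show ?thesis
    proof (cases b)
      case (In j l')
      from h \<open>a = In i l\<close> In have e1: "4 * int i + fst (lvx l) = 4 * int j + fst (lvx l')"
        and e2: "snd (lvx l) = snd (lvx l')" by auto
      have "int i = int j" using eq4[OF e1] lvx_range[of l] lvx_range[of l'] by auto
      then have "i = j" by simp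
      with e1 e2 have "lvx l = lvx l'" by (simp add: prod_eq_iff)
      then show ?thesis using \<open>i = j\<close> \<open>a = In i l\<close> In lvx_inj by auto
    next
      case (Bd j c)
      from h \<open>a = In i l\<close> Bd have "4 * int i + fst (lvx l) = 4 * int j" by auto
      then have False using no4 lvx_range[of l] by auto
      then show ?thesis ..
    qed
  next
    case (Bd i c)
    then show ?thesis
    proof (cases b)
      case (In j l')
      from h \<open>a = Bd i c\<close> In have "4 * int j + fst (lvx l') = 4 * int i" by auto
      then have False using no4 lvx_range[of l'] by auto
      then show ?thesis ..
    next
      case (Bd j d)
      from h \<open>a = Bd i c\<close> Bd show ?thesis by (auto split: if_splits)
    qed
  qed
qed

lemma hex_eq: "hexagon (4 * int i, 0) \<union> hexagon (4 * int i + 2, 0) \<union> hexagon (4 * int i + 1, 1)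
   \<union> hexagon (4 * int i + 1, -1) = image vtx ` (range (ed i) \<union> {rung i, rung (Suc i)})"
proof -
  have r: "range (ed i) = ed i ` {T12 , T23 , T1U , T3U , B12 , B23 , B1D , B3D
  , UL , U12 , U23 , UR , DL , D12 , D23 , DR , MR}"
    by (simp add: le_UNIV)
  show ?thesis unfolding r
    by (simp add: hexagon_def ed_def rung_def algebra_simps) (auto simp: insert_commute)
qed


lemma pyrene_edges_iso:
  assumes "n \<ge> 1"
  shows "pyrene_edges n = image vtx ` AE n"
proof -
  have "pyrene_edges n = (\<Union>i<n. hexagon (4 * int i, 0) \<union> hexagon (4 * int i + 2, 0) \<union> hexagon (4 * int i + 1, 1)
   \<union> hexagon (4 * int i + 1, -1))"
    unfolding pyrene_edges_def pyrene_hexagons_def by auto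
  also have "\<dots> = (\<Union>i<n. image vtx ` (range (ed i) \<union> {rung i, rung (Suc i)}))"
    by (simp only: hex_eq)
  also have "\<dots> = image vtx ` (\<Union>i<n. (range (ed i) \<union> {rung i, rung (Suc i)}))"
    by (simp add: image_UN)
  also have "(\<Union>i<n. (range (ed i) \<union> {rung i, rung (Suc i)})) = AE n"
  proof -
    have "(\<Union>i<n. {rung i, rung (Suc i)}) = rung ` {..n}"
    proof (rule set_eqI, rule iffI)
      fix x assume "x \<in> (\<Union>i<n. {rung i, rung (Suc i)})" then show "x \<in> rung ` {..n}" by auto
    next
      fix x assume "x \<in> rung ` {..n}"
      then obtain j where j: "j \<le> n" "x = rung j" by auto
      show "x \<in> (\<Union>i<n. {rung i, rung (Suc i)})"
      proof (cases "j < n")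
        case True then show ?thesis using j by auto
      next
        case False then have "j = Suc (n - 1)" using j assms by auto
        then show ?thesis using j assms by (intro UN_I[of "n - 1"]) auto
      qed
    qed
    then show ?thesis unfolding AE_def UN_Un_distrib by simp
  qed
  finally show ?thesis .
qed

lemma pyrene_vertices_iso:
  assumes "n \<ge> 1"
  shows "pyrene_vertices n = vtx ` AV n"
  unfolding pyrene_vertices_def pyrene_edges_iso[OF assms] AV_def by auto


lemma inj_imimage: "inj f \<Longrightarrow> inj (image f)"
  by (simp add: inj_image_eq_iff inj_on_def)

lemma pm_image_iff:
  assumes f: "inj f"
  shows "perfect_matching (f ` V) (image f ` E) (image f ` M) \<longleftrightarrow> perfect_matching V E M"
proof -
  have F: "inj (image f)" using inj_imimage[OF f] .
  have s: "(image f ` M \<subseteq> image f ` E) \<longleftrightarrow> M \<subseteq> E"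
    using F by (simp add: inj_image_subset_iff)
  have mem: "\<And>u e. (f u \<in> f ` e) \<longleftrightarrow> u \<in> e" using f by (simp add: inj_image_mem_iff)
  have v: "(\<forall>v\<in>f ` V. \<exists>!e. e \<in> image f ` M \<and> v \<in> e) \<longleftrightarrow> (\<forall>u\<in>V. \<exists>!e. e \<in> M \<and> u \<in> e)"
  proof -
    have "(\<exists>!e. e \<in> image f ` M \<and> f u \<in> e) \<longleftrightarrow> (\<exists>!e. e \<in> M \<and> u \<in> e)" for u
    proof
      assume h: "\<exists>!e. e \<in> image f ` M \<and> f u \<in> e"
      then obtain e' where e': "e' \<in> image f ` M" "f u \<in> e'" by blast
      then obtain e where e: "e \<in> M" "e' = f ` e" by blast
      show "\<exists>!e. e \<in> M \<and> u \<in> e"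
      proof (rule ex1I[of _ e])
        show "e \<in> M \<and> u \<in> e" using e e' mem by auto
        fix d assume d: "d \<in> M \<and> u \<in> d"
        then have "f ` d \<in> image f ` M \<and> f u \<in> f ` d" by auto
        with h e e' have "f ` d = f ` e" by blast
        then show "d = e" using F by (simp add: inj_eq)
      qed
    next
      assume h: "\<exists>!e. e \<in> M \<and> u \<in> e"
      then obtain e where e: "e \<in> M" "u \<in> e" by blast
      show "\<exists>!e. e \<in> image f ` M \<and> f u \<in> e"
      proof (rule ex1I[of _ "f ` e"])
        show "f ` e \<in> image f ` M \<and> f u \<in> f ` e" using e by auto
        fix d' assume d': "d' \<in> image f ` M \<and> f u \<in> d'"
        then obtain d where d: "d \<in> M" "d' = f ` d" by blast
        with d' mem have "u \<in> d" by auto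
        with h e d have "d = e" by blast
        then show "d' = f ` e" using d by simp
      qed
    qed
    then show ?thesis by simp
  qed
  show ?thesis unfolding perfect_matching_def s v ..
qed


lemma pm_image_ex:
  assumes f: "inj f" and pm: "perfect_matching (f ` V) (image f ` E) M'"
  shows "\<exists>M. M' = image f ` M \<and> perfect_matching V E M"
proof -
  let ?M = "{e \<in> E. f ` e \<in> M'}"
  have "M' \<subseteq> image f ` E" using pm unfolding perfect_matching_def by auto
  then have eq: "M' = image f ` ?M" by auto
  have "perfect_matching (f ` V) (image f ` E) (image f ` ?M)" using eq pm by simp
  then have "perfect_matching V E ?M" using pm_image_iff[OF f] by blast
  then show ?thesis using eq by blast
qed

lemma pms_image:
  assumes f: "inj f"
  shows "{M'. perfect_matching (f ` V) (image f ` E) M'} = image (image f) ` {M. perfect_matching V E M}"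
proof (rule set_eqI, rule iffI)
  fix M' assume "M' \<in> {M'. perfect_matching (f ` V) (image f ` E) M'}"
  then obtain M where "M' = image f ` M" "perfect_matching V E M" using pm_image_ex[OF f] by blast
  then show "M' \<in> image (image f) ` {M. perfect_matching V E M}" by blast
next
  fix M' assume "M' \<in> image (image f) ` {M. perfect_matching V E M}"
  then obtain M where "M' = image f ` M" "perfect_matching V E M" by blast
  then show "M' \<in> {M'. perfect_matching (f ` V) (image f ` E) M'}" using pm_image_iff[OF f] by simp
qed

lemma afs_image:
  assumes f: "inj f"
  shows "anti_forcing_set (f ` V) (image f ` E) (image f ` M) (image f ` S) \<longleftrightarrow> anti_forcing_set V E M S"
proof -
  have F: "inj (image f)" using inj_imimage[OF f] .
  have d: "image f ` E - image f ` S = image f ` (E - S)" "image f ` E - image f ` M = image f ` (E - M)"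
    using F by (auto simp: image_set_diff)
  have s: "(image f ` S \<subseteq> image f ` (E - M)) \<longleftrightarrow> S \<subseteq> E - M"
    using F by (simp add: inj_image_subset_iff)
  have FF: "inj (image (image f))" using inj_imimage[OF F] .
  have "({M'. perfect_matching (f ` V) (image f ` (E - S)) M'} = {image f ` M}) \<longleftrightarrow>
        ({M'. perfect_matching V (E - S) M'} = {M})"
    unfolding pms_image[OF f]
    using inj_image_eq_iff[OF FF, of "{M. perfect_matching V (E - S) M}" "{M}"] by simp
  then show ?thesis unfolding anti_forcing_set_def d s by simp
qed

lemma af_image:
  assumes f: "inj f"
  shows "anti_forcing_number (f ` V) (image f ` E) (image f ` M) = anti_forcing_number V E M"
proof -
  have F: "inj (image f)" using inj_imimage[OF f] .
  have "(\<exists>S'. anti_forcing_set (f ` V) (image f ` E) (image f ` M) S' \<and> finite S' \<and> card S' = k) \<longleftrightarrow>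
        (\<exists>S. anti_forcing_set V E M S \<and> finite S \<and> card S = k)" for k
  proof
    assume "\<exists>S'. anti_forcing_set (f ` V) (image f ` E) (image f ` M) S' \<and> finite S' \<and> card S' = k"
    then obtain S' where S': "anti_forcing_set (f ` V) (image f ` E) (image f ` M) S'" "finite S'" "card S' = k" by blast
    then have "S' \<subseteq> image f ` E" unfolding anti_forcing_set_def by auto
    then obtain S where S: "S' = image f ` S" by (meson subset_imageE)
    have "finite S" using S S'(2) F by (simp add: finite_image_iff inj_on_subset)
    moreover have "card S = k" using S S'(3) F by (simp add: card_image inj_on_subset)
    ultimately show "\<exists>S. anti_forcing_set V E M S \<and> finite S \<and> card S = k"
      using S'(1) S afs_image[OF f] by blast
  next
    assume "\<exists>S. anti_forcing_set V E M S \<and> finite S \<and> card S = k"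
    then obtain S where S: "anti_forcing_set V E M S" "finite S" "card S = k" by blast
    then show "\<exists>S'. anti_forcing_set (f ` V) (image f ` E) (image f ` M) S' \<and> finite S' \<and> card S' = k"
      using afs_image[OF f] F by (intro exI[of _ "image f ` S"]) (auto simp: card_image inj_on_subset)
  qed
  then show ?thesis unfolding anti_forcing_number_def by simp
qed

lemma afpoly_image:
  assumes f: "inj f"
  shows "anti_forcing_poly (f ` V) (image f ` E) = anti_forcing_poly V E"
proof -
  have F: "inj (image f)" using inj_imimage[OF f] .
  have FF: "inj (image (image f))" using inj_imimage[OF F] .
  show ?thesis
    unfolding anti_forcing_poly_def pms_image[OF f]
    by (subst sum.reindex) (auto intro: inj_on_subset[OF FF] simp: af_image[OF f])
qed


datatype ty = Hz bool bool | Va | Vb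

definition lset :: "ty \<Rightarrow> le set" where
  "lset t = (case t of
      Hz a b \<Rightarrow> (if a then {T12, T3U, U12} else {T23, T1U, U23}) \<union> (if b then {B12, B3D, D12} else {B23, B1D, D23})
    | Va \<Rightarrow> {T12, T3U, B12, B3D, UL, DL, MR}
    | Vb \<Rightarrow> {T23, T1U, B23, B1D, UR, DR, MR})"

definition rung_in :: "ty list \<Rightarrow> nat \<Rightarrow> bool" where
  "rung_in t j = (\<not> (j < length t \<and> t ! j = Va) \<and> \<not> (0 < j \<and> j \<le> length t \<and> t ! (j - 1) = Vb))"

definition valid :: "ty list \<Rightarrow> bool" where
  "valid t = (\<forall>i. Suc i < length t \<longrightarrow> \<not> (t ! i = Vb \<and> t ! Suc i = Va))"

definition enc :: "ty list \<Rightarrow> node set set" where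
  "enc t = (\<Union>i<length t. ed i ` lset (t ! i)) \<union> rung ` {j. j \<le> length t \<and> rung_in t j}"

fun lnb :: "lv \<Rightarrow> le set" where
  "lnb T1 = {T12, T1U}" | "lnb T2 = {T12, T23}" | "lnb T3 = {T23, T3U}"
| "lnb U1 = {T1U, UL, U12}" | "lnb U2 = {U12, U23, MR}" | "lnb U3 = {U23, T3U, UR}"
| "lnb D1 = {B1D, DL, D12}" | "lnb D2 = {D12, D23, MR}" | "lnb D3 = {D23, B3D, DR}"
| "lnb B1 = {B12, B1D}" | "lnb B2 = {B12, B23}" | "lnb B3 = {B23, B3D}"

lemma in_ed: "In k x \<in> ed i l \<longleftrightarrow> k = i \<and> l \<in> lnb x"
  by (cases l; cases x) (auto simp: ed_def)

lemma bd_ed: "Bd j b \<in> ed i l \<longleftrightarrow> (j = i \<and> l = (if b then UL else DL)) \<or> (j = Suc i \<and> l = (if b then UR else DR))"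
  by (cases l; cases b) (auto simp: ed_def)

lemma in_rung: "In k x \<notin> rung j" and bd_rung: "Bd j' b \<in> rung j \<longleftrightarrow> j' = j"
  by (auto simp: rung_def)

lemma ed_inj: "ed i l = ed j l' \<longleftrightarrow> i = j \<and> l = l'"
proof
  assume h: "ed i l = ed j l'"
  show "i = j \<and> l = l'"
    using h by (cases l; cases l') (auto simp: ed_def doubleton_eq_iff)
qed auto

lemma ed_ne_rung: "ed i l \<noteq> rung j"
  by (cases l) (auto simp: ed_def rung_def doubleton_eq_iff)

lemma rung_inj: "rung i = rung j \<longleftrightarrow> i = j"
  by (auto simp: rung_def doubleton_eq_iff)

lemma mem_enc_ed: "ed i l \<in> enc t \<longleftrightarrow> i < length t \<and> l \<in> lset (t ! i)"
  unfolding enc_def by (auto simp: ed_inj ed_ne_rung)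

lemma mem_enc_rung: "rung j \<in> enc t \<longleftrightarrow> j \<le> length t \<and> rung_in t j"
  unfolding enc_def by (auto simp: rung_inj ed_ne_rung[symmetric])

lemma AE_cases: "e \<in> AE n \<Longrightarrow> (\<And>i l. i < n \<Longrightarrow> e = ed i l \<Longrightarrow> P) \<Longrightarrow> (\<And>j. j \<le> n \<Longrightarrow> e = rung j \<Longrightarrow> P) \<Longrightarrow> P"
  unfolding AE_def by auto

lemma ed_AE: "i < n \<Longrightarrow> ed i l \<in> AE n" and rung_AE: "j \<le> n \<Longrightarrow> rung j \<in> AE n"
  unfolding AE_def by auto

lemma enc_sub: "enc t \<subseteq> AE (length t)"
  unfolding enc_def AE_def by auto

lemma AV_In: "In i x \<in> AV n \<longleftrightarrow> i < n"
proof
  assume "In i x \<in> AV n"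
  then obtain e where "e \<in> AE n" "In i x \<in> e" unfolding AV_def by auto
  then show "i < n" by (auto elim!: AE_cases simp: in_ed in_rung)
next
  assume "i < n"
  obtain l where l: "l \<in> lnb x" by (cases x) auto
  have "ed i l \<in> AE n" using \<open>i < n\<close> by (rule ed_AE)
  moreover have "In i x \<in> ed i l" unfolding in_ed using l by simp
  ultimately show "In i x \<in> AV n" unfolding AV_def by auto
qed

lemma AV_Bd: "Bd j b \<in> AV n \<longleftrightarrow> j \<le> n"
proof
  assume "Bd j b \<in> AV n"
  then obtain e where "e \<in> AE n" "Bd j b \<in> e" unfolding AV_def by auto
  then show "j \<le> n" by (auto elim!: AE_cases simp: bd_ed bd_rung)
next
  assume "j \<le> n"
  then show "Bd j b \<in> AV n" unfolding AV_def using rung_AE[of j n]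
    by (intro UnionI[of "rung j"]) (auto simp: rung_def)
qed

lemma lnb_lset_single: "\<exists>l0. lnb x \<inter> lset t = {l0}"
  by (cases x; cases t) (auto simp: lset_def)


lemma UL_lset: "UL \<in> lset t \<longleftrightarrow> t = Va" and DL_lset: "DL \<in> lset t \<longleftrightarrow> t = Va"
  and UR_lset: "UR \<in> lset t \<longleftrightarrow> t = Vb" and DR_lset: "DR \<in> lset t \<longleftrightarrow> t = Vb"
  by (cases t; auto simp: lset_def)+

lemma enc_pm:
  assumes v: "valid t" and n: "length t = n"
  shows "perfect_matching (AV n) (AE n) (enc t)"
  unfolding perfect_matching_def
proof (intro conjI ballI)
  show "enc t \<subseteq> AE n" using enc_sub[of t] n by simp
next
  fix u assume u: "u \<in> AV n"
  show "\<exists>!e. e \<in> enc t \<and> u \<in> e"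
  proof (cases u)
    case (In i x)
    with u have i: "i < n" by (simp add: AV_In)
    obtain l0 where l0: "lnb x \<inter> lset (t ! i) = {l0}" using lnb_lset_single by blast
    show ?thesis
    proof (rule ex1I[of _ "ed i l0"])
      show "ed i l0 \<in> enc t \<and> u \<in> ed i l0" using l0 i n In by (auto simp: mem_enc_ed in_ed)
    next
      fix e assume e: "e \<in> enc t \<and> u \<in> e"
      then have "e \<in> AE n" using enc_sub[of t] n by auto
      then show "e = ed i l0"
      proof (rule AE_cases)
        fix k l assume "k < n" "e = ed k l"
        then show ?thesis using e In l0 by (auto simp: mem_enc_ed in_ed)
      next
        fix j assume "j \<le> n" "e = rung j"
        then show ?thesis using e In by (simp add: in_rung)
      qed
    qed
  next
    case (Bd j b)
    with u have j: "j \<le> n" by (simp add: AV_Bd)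
    define cR where "cR = (j < n \<and> t ! j = Va)"
    define cL where "cL = (0 < j \<and> t ! (j - 1) = Vb)"
    have ri: "rung_in t j \<longleftrightarrow> \<not> cR \<and> \<not> cL" unfolding rung_in_def cR_def cL_def using j n by auto
    have nboth: "\<not> (cR \<and> cL)"
    proof
      assume "cR \<and> cL"
      then have "Suc (j - 1) < length t" "t ! (j - 1) = Vb" "t ! Suc (j - 1) = Va"
        unfolding cR_def cL_def using n by auto
      then show False using v unfolding valid_def by blast
    qed
    define e0 where "e0 = (if cR then ed j (if b then UL else DL) else if cL then ed (j - 1) (if b then UR else DR) else rung j)"
    show ?thesis
    proof (rule ex1I[of _ e0])
      show "e0 \<in> enc t \<and> u \<in> e0"
        unfolding e0_def using Bd j n ri
        by (auto simp: mem_enc_ed mem_enc_rung bd_ed bd_rung cR_def cL_def UL_lset DL_lset UR_lset DR_lset)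
    next
      fix e assume e: "e \<in> enc t \<and> u \<in> e"
      then have "e \<in> AE n" using enc_sub[of t] n by auto
      then show "e = e0"
      proof (rule AE_cases)
        fix k l assume k: "k < n" "e = ed k l"
        then have lk: "l \<in> lset (t ! k)" "Bd j b \<in> ed k l" using e Bd by (auto simp: mem_enc_ed)
        from lk(2) have "(j = k \<and> l = (if b then UL else DL)) \<or> (j = Suc k \<and> l = (if b then UR else DR))"
          by (simp add: bd_ed)
        then show ?thesis
        proof
          assume h: "j = k \<and> l = (if b then UL else DL)"
          then have "cR" using lk k n by (cases b) (auto simp: cR_def UL_lset DL_lset)
          then show ?thesis using h k unfolding e0_def by simp
        next
          assume h: "j = Suc k \<and> l = (if b then UR else DR)"
          then have "cL" using lk k n by (cases b) (auto simp: cL_def UR_lset DR_lset)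
          then show ?thesis using h k nboth unfolding e0_def by simp
        qed
      next
        fix k assume k: "k \<le> n" "e = rung k"
        then have "k = j" "rung_in t j" using e Bd by (auto simp: bd_rung mem_enc_rung)
        then show ?thesis using k ri unfolding e0_def by simp
      qed
    qed
  qed
qed


lemma pm_uniq: "perfect_matching V E M \<Longrightarrow> v \<in> V \<Longrightarrow> e1 \<in> M \<Longrightarrow> e2 \<in> M \<Longrightarrow> v \<in> e1 \<Longrightarrow> v \<in> e2 \<Longrightarrow> e1 = e2"
  unfolding perfect_matching_def by blast

lemma pm_ex: "perfect_matching V E M \<Longrightarrow> v \<in> V \<Longrightarrow> \<exists>e\<in>M. v \<in> e \<and> e \<in> E"
  unfolding perfect_matching_def by blast

lemma ex2: "(\<exists>l\<in>{a,b}. P l) \<and> (\<forall>l1\<in>{a,b}. \<forall>l2\<in>{a,b}. P l1 \<longrightarrow> P l2 \<longrightarrow> l1 = l2) \<Longrightarrow> a \<noteq> b \<Longrightarrow> P a = (\<not> P b)"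
  by blast

lemma ex3: "(\<exists>l\<in>{a,b,c}. P l) \<and> (\<forall>l1\<in>{a,b,c}. \<forall>l2\<in>{a,b,c}. P l1 \<longrightarrow> P l2 \<longrightarrow> l1 = l2) \<Longrightarrow> a \<noteq> b \<Longrightarrow> a \<noteq> c \<Longrightarrow> b \<noteq> c
  \<Longrightarrow> (P a \<or> P b \<or> P c) \<and> \<not> (P a \<and> P b) \<and> \<not> (P a \<and> P c) \<and> \<not> (P b \<and> P c)"
  by blast

locale pmloc =
  fixes n :: nat and M :: "node set set"
  assumes pm: "perfect_matching (AV n) (AE n) M"
begin

lemma vx_in:
  assumes i: "i < n"
  shows "(\<exists>l\<in>lnb x. ed i l \<in> M) \<and> (\<forall>l1\<in>lnb x. \<forall>l2\<in>lnb x. ed i l1 \<in> M \<longrightarrow> ed i l2 \<in> M \<longrightarrow> l1 = l2)"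
proof
  have v: "In i x \<in> AV n" using i by (simp add: AV_In)
  obtain e where e: "e \<in> M" "In i x \<in> e" "e \<in> AE n" using pm_ex[OF pm v] by blast
  from e(3) show "\<exists>l\<in>lnb x. ed i l \<in> M"
  proof (rule AE_cases)
    fix k l assume "k < n" "e = ed k l" then show ?thesis using e by (auto simp: in_ed)
  next
    fix j assume "j \<le> n" "e = rung j" then show ?thesis using e by (simp add: in_rung)
  qed
  show "\<forall>l1\<in>lnb x. \<forall>l2\<in>lnb x. ed i l1 \<in> M \<longrightarrow> ed i l2 \<in> M \<longrightarrow> l1 = l2"
  proof (intro ballI impI)
    fix l1 l2 assume "l1 \<in> lnb x" "l2 \<in> lnb x" "ed i l1 \<in> M" "ed i l2 \<in> M"
    then have "ed i l1 = ed i l2" using pm_uniq[OF pm v] by (simp add: in_ed)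
    then show "l1 = l2" by (simp add: ed_inj)
  qed
qed

lemma local_truth:
  assumes i: "i < n"
  shows "(ed i T23 \<in> M) = (ed i T12 \<notin> M) \<and> (ed i T1U \<in> M) = (ed i T12 \<notin> M) \<and> (ed i T3U \<in> M) = (ed i T12 \<in> M)
    \<and> (ed i B23 \<in> M) = (ed i B12 \<notin> M) \<and> (ed i B1D \<in> M) = (ed i B12 \<notin> M) \<and> (ed i B3D \<in> M) = (ed i B12 \<in> M)
    \<and> (ed i U12 \<in> M) = (ed i MR \<notin> M \<and> ed i T12 \<in> M) \<and> (ed i U23 \<in> M) = (ed i MR \<notin> M \<and> ed i T12 \<notin> M)
    \<and> (ed i UL \<in> M) = (ed i MR \<in> M \<and> ed i T12 \<in> M) \<and> (ed i UR \<in> M) = (ed i MR \<in> M \<and> ed i T12 \<notin> M)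
    \<and> (ed i D12 \<in> M) = (ed i MR \<notin> M \<and> ed i B12 \<in> M) \<and> (ed i D23 \<in> M) = (ed i MR \<notin> M \<and> ed i B12 \<notin> M)
    \<and> (ed i DL \<in> M) = (ed i MR \<in> M \<and> ed i B12 \<in> M) \<and> (ed i DR \<in> M) = (ed i MR \<in> M \<and> ed i B12 \<notin> M)"
proof -
  define P where "P l = (ed i l \<in> M)" for l
  have f: "\<And>x. (\<exists>l\<in>lnb x. P l) \<and> (\<forall>l1\<in>lnb x. \<forall>l2\<in>lnb x. P l1 \<longrightarrow> P l2 \<longrightarrow> l1 = l2)"
    using vx_in[OF i] unfolding P_def by blast
  have t1: "P T12 = (\<not> P T1U)" using ex2[OF f[of T1, unfolded lnb.simps]] by simp
  have t2: "P T12 = (\<not> P T23)" using ex2[OF f[of T2, unfolded lnb.simps]] by simp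
  have t3: "P T23 = (\<not> P T3U)" using ex2[OF f[of T3, unfolded lnb.simps]] by simp
  have b1: "P B12 = (\<not> P B1D)" using ex2[OF f[of B1, unfolded lnb.simps]] by simp
  have b2: "P B12 = (\<not> P B23)" using ex2[OF f[of B2, unfolded lnb.simps]] by simp
  have b3: "P B23 = (\<not> P B3D)" using ex2[OF f[of B3, unfolded lnb.simps]] by simp
  have u1: "(P T1U \<or> P UL \<or> P U12) \<and> \<not> (P T1U \<and> P UL) \<and> \<not> (P T1U \<and> P U12) \<and> \<not> (P UL \<and> P U12)"
    using ex3[OF f[of U1, unfolded lnb.simps]] by simp
  have u2: "(P U12 \<or> P U23 \<or> P MR) \<and> \<not> (P U12 \<and> P U23) \<and> \<not> (P U12 \<and> P MR) \<and> \<not> (P U23 \<and> P MR)"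
    using ex3[OF f[of U2, unfolded lnb.simps]] by simp
  have u3: "(P U23 \<or> P T3U \<or> P UR) \<and> \<not> (P U23 \<and> P T3U) \<and> \<not> (P U23 \<and> P UR) \<and> \<not> (P T3U \<and> P UR)"
    using ex3[OF f[of U3, unfolded lnb.simps]] by simp
  have d1: "(P B1D \<or> P DL \<or> P D12) \<and> \<not> (P B1D \<and> P DL) \<and> \<not> (P B1D \<and> P D12) \<and> \<not> (P DL \<and> P D12)"
    using ex3[OF f[of D1, unfolded lnb.simps]] by simp
  have d2: "(P D12 \<or> P D23 \<or> P MR) \<and> \<not> (P D12 \<and> P D23) \<and> \<not> (P D12 \<and> P MR) \<and> \<not> (P D23 \<and> P MR)"
    using ex3[OF f[of D2, unfolded lnb.simps]] by simp
  have d3: "(P D23 \<or> P B3D \<or> P DR) \<and> \<not> (P D23 \<and> P B3D) \<and> \<not> (P D23 \<and> P DR) \<and> \<not> (P B3D \<and> P DR)"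
    using ex3[OF f[of D3, unfolded lnb.simps]] by simp
  have T: "P T23 = (\<not> P T12)" "P T1U = (\<not> P T12)" "P T3U = P T12" using t1 t2 t3 by auto
  have B: "P B23 = (\<not> P B12)" "P B1D = (\<not> P B12)" "P B3D = P B12" using b1 b2 b3 by auto
  have U: "P U12 = (\<not> P MR \<and> P T12)" "P U23 = (\<not> P MR \<and> \<not> P T12)"
     "P UL = (P MR \<and> P T12)" "P UR = (P MR \<and> \<not> P T12)"
    using u1 u2 u3 T by blast+
  have D: "P D12 = (\<not> P MR \<and> P B12)" "P D23 = (\<not> P MR \<and> \<not> P B12)"
     "P DL = (P MR \<and> P B12)" "P DR = (P MR \<and> \<not> P B12)"
    using d1 d2 d3 B by blast+
  show ?thesis using T B U D unfolding P_def by blast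
qed

lemma vx_bd:
  assumes j: "j \<le> n"
  shows "rung j \<in> M \<or> (0 < j \<and> ed (j - 1) (if b then UR else DR) \<in> M) \<or> (j < n \<and> ed j (if b then UL else DL) \<in> M)"
proof -
  have v: "Bd j b \<in> AV n" using j by (simp add: AV_Bd)
  obtain e where e: "e \<in> M" "Bd j b \<in> e" "e \<in> AE n" using pm_ex[OF pm v] by blast
  from e(3) show ?thesis
  proof (rule AE_cases)
    fix k l assume k: "k < n" "e = ed k l"
    then have "(j = k \<and> l = (if b then UL else DL)) \<or> (j = Suc k \<and> l = (if b then UR else DR))"
      using e by (simp add: bd_ed)
    then show ?thesis using k e by auto
  next
    fix k assume "k \<le> n" "e = rung k" then show ?thesis using e by (simp add: bd_rung)
  qed
qed

lemma bd_excl: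
  assumes "j \<le> n" "e1 \<in> M" "e2 \<in> M" "Bd j b \<in> e1" "Bd j b \<in> e2"
  shows "e1 = e2"
  using pm_uniq[OF pm _ assms(2,3,4,5)] assms(1) by (simp add: AV_Bd)

lemma excl_L_rung: "i < n \<Longrightarrow> ed i (if b then UL else DL) \<in> M \<Longrightarrow> rung i \<notin> M"
  using bd_excl[of i "ed i (if b then UL else DL)" "rung i" b] ed_ne_rung[of i "if b then UL else DL" i]
  by (auto simp: bd_ed bd_rung)

lemma excl_R_rung: "0 < j \<Longrightarrow> j \<le> n \<Longrightarrow> ed (j - 1) (if b then UR else DR) \<in> M \<Longrightarrow> rung j \<notin> M"
  using bd_excl[of j "ed (j - 1) (if b then UR else DR)" "rung j" b] ed_ne_rung[of "j - 1" "if b then UR else DR" j]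
  by (auto simp: bd_ed bd_rung)

lemma excl_L_R: "0 < j \<Longrightarrow> j < n \<Longrightarrow> ed j (if b then UL else DL) \<in> M \<Longrightarrow> ed (j - 1) (if b then UR else DR) \<notin> M"
  using bd_excl[of j "ed j (if b then UL else DL)" "ed (j - 1) (if b then UR else DR)" b]
  by (cases b) (auto simp: bd_ed ed_inj)

lemma no_mixA: "i < n \<Longrightarrow> \<not> (ed i MR \<in> M \<and> ed i T12 \<in> M \<and> ed i B12 \<notin> M)"
proof (induction i)
  case 0
  show ?case
  proof
    assume h: "ed 0 MR \<in> M \<and> ed 0 T12 \<in> M \<and> ed 0 B12 \<notin> M"
    have "ed 0 UL \<in> M" "ed 0 DL \<notin> M" using local_truth[OF 0] h by auto
    then have "rung 0 \<notin> M" using excl_L_rung[of 0 True] 0 by simp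
    then show False using vx_bd[of 0 False] \<open>ed 0 DL \<notin> M\<close> by simp
  qed
next
  case (Suc k)
  show ?case
  proof
    assume h: "ed (Suc k) MR \<in> M \<and> ed (Suc k) T12 \<in> M \<and> ed (Suc k) B12 \<notin> M"
    have a: "ed (Suc k) UL \<in> M" "ed (Suc k) DL \<notin> M" using local_truth[OF Suc.prems] h by auto
    then have "rung (Suc k) \<notin> M" using excl_L_rung[of "Suc k" True] Suc.prems by simp
    then have "ed k DR \<in> M" using vx_bd[of "Suc k" False] a Suc.prems by simp
    moreover have "ed k UR \<notin> M" using excl_L_R[of "Suc k" True] a Suc.prems by simp
    ultimately have "ed k MR \<in> M \<and> ed k T12 \<in> M \<and> ed k B12 \<notin> M"
      using local_truth[of k] Suc.prems by auto
    then show False using Suc.IH Suc.prems by simp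
  qed
qed

lemma no_mixB: "i < n \<Longrightarrow> \<not> (ed i MR \<in> M \<and> ed i T12 \<notin> M \<and> ed i B12 \<in> M)"
proof (induction i)
  case 0
  show ?case
  proof
    assume h: "ed 0 MR \<in> M \<and> ed 0 T12 \<notin> M \<and> ed 0 B12 \<in> M"
    have "ed 0 DL \<in> M" "ed 0 UL \<notin> M" using local_truth[OF 0] h by auto
    then have "rung 0 \<notin> M" using excl_L_rung[of 0 False] 0 by simp
    then show False using vx_bd[of 0 True] \<open>ed 0 UL \<notin> M\<close> by simp
  qed
next
  case (Suc k)
  show ?case
  proof
    assume h: "ed (Suc k) MR \<in> M \<and> ed (Suc k) T12 \<notin> M \<and> ed (Suc k) B12 \<in> M"
    have a: "ed (Suc k) DL \<in> M" "ed (Suc k) UL \<notin> M" using local_truth[OF Suc.prems] h by auto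
    then have "rung (Suc k) \<notin> M" using excl_L_rung[of "Suc k" False] Suc.prems by simp
    then have "ed k UR \<in> M" using vx_bd[of "Suc k" True] a Suc.prems by simp
    moreover have "ed k DR \<notin> M" using excl_L_R[of "Suc k" False] a Suc.prems by simp
    ultimately have "ed k MR \<in> M \<and> ed k T12 \<notin> M \<and> ed k B12 \<in> M"
      using local_truth[of k] Suc.prems by auto
    then show False using Suc.IH Suc.prems by simp
  qed
qed

end

definition tyof :: "node set set \<Rightarrow> nat \<Rightarrow> ty" where
  "tyof M i = (if ed i MR \<in> M then (if ed i T12 \<in> M then Va else Vb) else Hz (ed i T12 \<in> M) (ed i B12 \<in> M))"

definition rb :: "node set set \<Rightarrow> nat \<Rightarrow> ty list" where
  "rb M n = map (tyof M) [0..<n]"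

context pmloc
begin

lemma mem_lset:
  assumes i: "i < n"
  shows "ed i l \<in> M \<longleftrightarrow> l \<in> lset (tyof M i)"
proof -
  note lt = local_truth[OF i]
  consider (A) "ed i MR \<in> M" "ed i T12 \<in> M" | (B) "ed i MR \<in> M" "ed i T12 \<notin> M" | (C) "ed i MR \<notin> M"
    by blast
  then show ?thesis
  proof cases
    case A
    then have "ed i B12 \<in> M" using no_mixA[OF i] by blast
    then show ?thesis using A unfolding tyof_def
      by (cases l) (simp_all add: lt lset_def)
  next
    case B
    then have "ed i B12 \<notin> M" using no_mixB[OF i] by blast
    then show ?thesis using B unfolding tyof_def
      by (cases l) (simp_all add: lt lset_def)
  next
    case C
    then show ?thesis unfolding tyof_def
      by (cases l) (simp_all add: lt lset_def)
  qed
qed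

lemma rung_mem: "j \<le> n \<Longrightarrow> rung j \<in> M \<longleftrightarrow> rung_in (rb M n) j"
proof -
  assume j: "j \<le> n"
  have r: "rung_in (rb M n) j \<longleftrightarrow> \<not> (j < n \<and> ed j UL \<in> M) \<and> \<not> (0 < j \<and> ed (j - 1) UR \<in> M)"
    unfolding rung_in_def rb_def using j mem_lset[of j UL] mem_lset[of "j - 1" UR]
    by (auto simp: UL_lset UR_lset)
  show ?thesis unfolding r using vx_bd[OF j, of True] excl_L_rung[of j True] excl_R_rung[of j True] j
    by auto
qed

lemma rb_valid: "valid (rb M n)"
  unfolding valid_def
proof (intro allI impI notI)
  fix i assume i: "Suc i < length (rb M n)" and h: "rb M n ! i = Vb \<and> rb M n ! Suc i = Va"
  then have "ed i UR \<in> M" "ed (Suc i) UL \<in> M" using mem_lset[of i UR] mem_lset[of "Suc i" UL]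
    by (auto simp: rb_def UL_lset UR_lset)
  then show False using excl_L_R[of "Suc i" True] i by (simp add: rb_def)
qed

lemma rb_enc: "enc (rb M n) = M"
proof (rule set_eqI)
  fix e
  have sub: "M \<subseteq> AE n" using pm unfolding perfect_matching_def by auto
  have sub2: "enc (rb M n) \<subseteq> AE n" using enc_sub[of "rb M n"] by (simp add: rb_def)
  show "e \<in> enc (rb M n) \<longleftrightarrow> e \<in> M"
  proof (cases "e \<in> AE n")
    case True
    then show ?thesis
    proof (rule AE_cases)
      fix i l assume "i < n" "e = ed i l"
      then show ?thesis using mem_lset[of i l] by (simp add: mem_enc_ed rb_def)
    next
      fix j assume "j \<le> n" "e = rung j"
      then show ?thesis using rung_mem[of j] by (simp add: mem_enc_rung rb_def)
    qed
  next
    case False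
    then show ?thesis using sub sub2 by blast
  qed
qed

end

lemma tyof_enc: "i < length t \<Longrightarrow> tyof (enc t) i = t ! i"
  unfolding tyof_def mem_enc_ed
  apply (cases "t ! i")
  apply (simp_all add: lset_def)
  done

lemma rb_of_enc: "rb (enc t) (length t) = t"
  unfolding rb_def by (rule nth_equalityI) (simp_all add: tyof_enc)


fun Sloc :: "nat \<Rightarrow> ty \<Rightarrow> node set set" where
  "Sloc i (Hz a b) = {ed i (if a then T1U else T3U), ed i (if b then B1D else B3D)} \<union> (if a = b then {ed i MR} else {})"
| "Sloc i Va = {rung i}"
| "Sloc i Vb = {rung (Suc i)}"

definition Sset :: "ty list \<Rightarrow> node set set" where
  "Sset t = (\<Union>i<length t. Sloc i (t ! i))"

lemma notin_enc: "x \<in> A \<Longrightarrow> B \<inter> A = {} \<Longrightarrow> x \<notin> B" by blast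

lemma sweep:
  assumes v: "valid t" and v': "valid t'" and len: "length t' = length t"
    and dis: "enc t' \<inter> Sset t = {}"
  shows "t' = t"
proof -
  let ?n = "length t"
  have capT: "i < ?n \<Longrightarrow> t ! i = Hz a b \<Longrightarrow> (if a then T1U else T3U) \<notin> lset (t' ! i)" for i a b
  proof -
    assume i: "i < ?n" and ti: "t ! i = Hz a b"
    have "ed i (if a then T1U else T3U) \<in> Sset t" unfolding Sset_def using i ti by force
    from notin_enc[OF this dis] show ?thesis using i len by (simp add: mem_enc_ed)
  qed
  have capB: "i < ?n \<Longrightarrow> t ! i = Hz a b \<Longrightarrow> (if b then B1D else B3D) \<notin> lset (t' ! i)" for i a b
  proof -
    assume i: "i < ?n" and ti: "t ! i = Hz a b"
    have "ed i (if b then B1D else B3D) \<in> Sset t" unfolding Sset_def using i ti by force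
    from notin_enc[OF this dis] show ?thesis using i len by (simp add: mem_enc_ed)
  qed
  have capM: "i < ?n \<Longrightarrow> t ! i = Hz a a \<Longrightarrow> MR \<notin> lset (t' ! i)" for i a
  proof -
    assume i: "i < ?n" and ti: "t ! i = Hz a a"
    have "ed i MR \<in> Sset t" unfolding Sset_def using i ti by force
    from notin_enc[OF this dis] show ?thesis using i len by (simp add: mem_enc_ed)
  qed
  have rVa: "i < ?n \<Longrightarrow> t ! i = Va \<Longrightarrow> \<not> rung_in t' i" for i
  proof -
    assume i: "i < ?n" and ti: "t ! i = Va"
    have "rung i \<in> Sset t" unfolding Sset_def using i ti by force
    from notin_enc[OF this dis] show ?thesis using i len by (simp add: mem_enc_rung)
  qed
  have rVb: "i < ?n \<Longrightarrow> t ! i = Vb \<Longrightarrow> \<not> rung_in t' (Suc i)" for i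
  proof -
    assume i: "i < ?n" and ti: "t ! i = Vb"
    have "rung (Suc i) \<in> Sset t" unfolding Sset_def using i ti by force
    from notin_enc[OF this dis] show ?thesis using i len by (simp add: mem_enc_rung)
  qed
  have vt: "Suc i < ?n \<Longrightarrow> t ! i = Vb \<Longrightarrow> t ! Suc i \<noteq> Va" for i using v unfolding valid_def by blast
  define Inv where "Inv i = (((\<forall>j<i. t' ! j = t ! j) \<and> (i < ?n \<and> t ! i = Va \<longrightarrow> t' ! i = Va))
      \<or> (i < ?n \<and> t' ! i = Va \<and> t ! i \<noteq> Va))" for i
  have "Inv i" if "i \<le> ?n" for i
    using that
  proof (induction i)
    case 0
    show ?case unfolding Inv_def using rVa[of 0] by (auto simp: rung_in_def len)
  next
    case (Suc i)
    then have i: "i < ?n" by simp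
    have IH: "Inv i" using Suc by simp
    have next_state: "t' ! i = t ! i \<Longrightarrow> (Suc i < ?n \<and> t ! Suc i = Va \<longrightarrow> t' ! Suc i = Va)"
    proof (intro impI)
      assume eq: "t' ! i = t ! i" and h: "Suc i < ?n \<and> t ! Suc i = Va"
      then have "\<not> rung_in t' (Suc i)" using rVa[of "Suc i"] by simp
      moreover have "t ! i \<noteq> Vb" using vt[of i] h by blast
      ultimately show "t' ! Suc i = Va" using eq h by (auto simp: rung_in_def len)
    qed
    show ?case
    proof (cases "((\<forall>j<i. t' ! j = t ! j) \<and> (t ! i = Va \<longleftrightarrow> t' ! i = Va))")
      case True
      then have agree: "\<forall>j<i. t' ! j = t ! j" and va: "t ! i = Va \<longleftrightarrow> t' ! i = Va" by auto
      show ?thesis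
      proof (cases "t ! i")
        case (Hz a b)
        then have "t' ! i \<noteq> Va" using va by simp
        moreover have c1: "(if a then T1U else T3U) \<notin> lset (t' ! i)" using capT[OF i Hz] .
        moreover have c2: "(if b then B1D else B3D) \<notin> lset (t' ! i)" using capB[OF i Hz] .
        moreover have c3: "a = b \<Longrightarrow> MR \<notin> lset (t' ! i)" using capM[OF i] Hz by blast
        ultimately have "t' ! i = Hz a b"
          by (cases "t' ! i"; cases a; cases b) (auto simp: lset_def split: if_splits)
        then have "t' ! i = t ! i" using Hz by simp
        then show ?thesis unfolding Inv_def using agree next_state by (auto simp: less_Suc_eq)
      next
        case Va
        then have "t' ! i = t ! i" using va by simp
        then show ?thesis unfolding Inv_def using agree next_state by (auto simp: less_Suc_eq)
      next
        case Vb
        then have nva: "t' ! i \<noteq> Va" using va by simp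
        have nr: "\<not> rung_in t' (Suc i)" using rVb[OF i Vb] .
        show ?thesis
        proof (cases "t' ! i = Vb")
          case True
          then have "t' ! i = t ! i" using Vb by simp
          then show ?thesis unfolding Inv_def using agree next_state by (auto simp: less_Suc_eq)
        next
          case False
          then have "Suc i < ?n \<and> t' ! Suc i = Va" using nr len by (auto simp: rung_in_def)
          moreover have "t ! Suc i \<noteq> Va" using vt[of i] Vb calculation by blast
          ultimately show ?thesis unfolding Inv_def by blast
        qed
      qed
    next
      case False
      then have dev: "t' ! i = Va" "t ! i \<noteq> Va" using IH i unfolding Inv_def by auto
      show ?thesis
      proof (cases "t ! i")
        case (Hz a b)
        have c1: "(if a then T1U else T3U) \<notin> lset (t' ! i)" using capT[OF i Hz] .
        have c2: "(if b then B1D else B3D) \<notin> lset (t' ! i)" using capB[OF i Hz] .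
        have c3: "a = b \<Longrightarrow> MR \<notin> lset (t' ! i)" using capM[OF i] Hz by blast
        have False using c1 c2 c3 dev(1) by (cases a; cases b) (auto simp: lset_def)
        then show ?thesis ..
      next
        case Va
        then show ?thesis using dev by simp
      next
        case Vb
        have nr: "\<not> rung_in t' (Suc i)" using rVb[OF i Vb] .
        then have "Suc i < ?n \<and> t' ! Suc i = Va" using dev len by (auto simp: rung_in_def)
        moreover have "t ! Suc i \<noteq> Va" using vt[of i] Vb calculation by blast
        ultimately show ?thesis unfolding Inv_def by blast
      qed
    qed
  qed
  then have "Inv ?n" by simp
  then have "\<forall>j<?n. t' ! j = t ! j" unfolding Inv_def by simp
  then show ?thesis using len by (simp add: list_eq_iff_nth_eq)
qed


fun cty :: "ty \<Rightarrow> nat" where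
  "cty (Hz a b) = (if a = b then 3 else 2)" | "cty Va = 1" | "cty Vb = 1"

definition cost :: "ty list \<Rightarrow> nat" where
  "cost t = (\<Sum>i<length t. cty (t ! i))"

lemma pm_sub: "perfect_matching V E M \<Longrightarrow> M \<inter> S = {} \<Longrightarrow> perfect_matching V (E - S) M"
  unfolding perfect_matching_def by blast

lemma pm_mono: "perfect_matching V (E - S) M \<Longrightarrow> perfect_matching V E M"
  unfolding perfect_matching_def by blast

lemma af_lower:
  assumes afs: "anti_forcing_set V E M S" and finS: "finite S"
    and fin: "finite W" and pm: "\<And>w. w \<in> W \<Longrightarrow> perfect_matching V E (P w)"
    and ne: "\<And>w. w \<in> W \<Longrightarrow> P w - M \<noteq> {}"
    and dj: "\<And>w1 w2. w1 \<in> W \<Longrightarrow> w2 \<in> W \<Longrightarrow> w1 \<noteq> w2 \<Longrightarrow> (P w1 - M) \<inter> (P w2 - M) = {}"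
  shows "card W \<le> card S"
proof -
  have a: "S \<subseteq> E - M \<and> {M'. perfect_matching V (E - S) M'} = {M}"
    using afs unfolding anti_forcing_set_def .
  note SM = conjunct1[OF a] and uniq = conjunct2[OF a]
  have hit: "S \<inter> (P w - M) \<noteq> {}" if w: "w \<in> W" for w
  proof
    assume h: "S \<inter> (P w - M) = {}"
    have "P w \<noteq> M" using ne[OF w] by auto
    have "P w \<inter> S = {}" using h SM by blast
    then have "perfect_matching V (E - S) (P w)" using pm_sub pm[OF w] by blast
    then have "P w \<in> {M'. perfect_matching V (E - S) M'}" by simp
    then have "P w \<in> {M}" using uniq by simp
    then have "P w = M" by simp
    then show False using \<open>P w \<noteq> M\<close> by simp
  qed
  define f where "f w = (SOME e. e \<in> S \<inter> (P w - M))" for w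
  have fw: "f w \<in> S \<inter> (P w - M)" if "w \<in> W" for w
  proof -
    from hit[OF that] obtain e where "e \<in> S \<inter> (P w - M)" by blast
    then show ?thesis unfolding f_def by (rule someI)
  qed
  have "inj_on f W"
  proof (rule inj_onI)
    fix w1 w2 assume "w1 \<in> W" "w2 \<in> W" "f w1 = f w2"
    show "w1 = w2"
    proof (rule ccontr)
      assume "w1 \<noteq> w2"
      then have d: "(P w1 - M) \<inter> (P w2 - M) = {}" using dj \<open>w1 \<in> W\<close> \<open>w2 \<in> W\<close> by blast
      have "f w1 \<in> (P w1 - M) \<inter> (P w2 - M)" using fw[OF \<open>w1 \<in> W\<close>] fw[OF \<open>w2 \<in> W\<close>] \<open>f w1 = f w2\<close> by auto
      then show False using d by simp
    qed
  qed
  moreover have "f ` W \<subseteq> S" using fw by blast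
  ultimately show ?thesis using card_inj_on_le[OF _ _ finS] by blast
qed

lemma af_exact:
  assumes S0: "anti_forcing_set V E M S0" "finite S0" "card S0 = c"
    and low: "\<And>S. anti_forcing_set V E M S \<Longrightarrow> finite S \<Longrightarrow> c \<le> card S"
  shows "anti_forcing_number V E M = c"
  unfolding anti_forcing_number_def
proof (rule Least_equality)
  show "\<exists>S. anti_forcing_set V E M S \<and> finite S \<and> card S = c" using S0 by blast
next
  fix k assume "\<exists>S. anti_forcing_set V E M S \<and> finite S \<and> card S = k"
  then show "c \<le> k" using low by blast
qed

lemma Sloc_props:
  assumes v: "valid t" and i: "i < length t"
  shows "Sloc i (t ! i) \<subseteq> AE (length t)" "Sloc i (t ! i) \<inter> enc t = {}"
proof -
  show "Sloc i (t ! i) \<subseteq> AE (length t)"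
    using i by (cases "t ! i") (auto simp: ed_AE rung_AE)
  show "Sloc i (t ! i) \<inter> enc t = {}"
  proof (cases "t ! i")
    case (Hz a b)
    then show ?thesis using i by (cases a; cases b) (auto simp: mem_enc_ed lset_def)
  next
    case Va
    then show ?thesis using i by (auto simp: mem_enc_rung rung_in_def)
  next
    case Vb
    then show ?thesis using i by (auto simp: mem_enc_rung rung_in_def)
  qed
qed

lemma card_Sloc: "card (Sloc i x) = cty x"
  by (cases x) (auto simp: ed_inj card_insert_if)

lemma Sloc_elem: "e \<in> Sloc i x \<Longrightarrow> (\<exists>l. e = ed i l) \<or> (x = Va \<and> e = rung i) \<or> (x = Vb \<and> e = rung (Suc i))"
  by (cases x) (auto split: if_splits)

lemma finite_Sloc: "finite (Sloc i x)"
  by (cases x) auto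

lemma Sloc_disj:
  assumes v: "valid t" and i: "i < length t" and j: "j < length t" and ij: "i \<noteq> j"
  shows "Sloc i (t ! i) \<inter> Sloc j (t ! j) = {}"
proof (rule ccontr)
  assume "Sloc i (t ! i) \<inter> Sloc j (t ! j) \<noteq> {}"
  then obtain e where e1: "e \<in> Sloc i (t ! i)" and e2: "e \<in> Sloc j (t ! j)" by blast
  have vt: "\<And>k. Suc k < length t \<Longrightarrow> t ! k = Vb \<Longrightarrow> t ! Suc k \<noteq> Va" using v unfolding valid_def by blast
  from Sloc_elem[OF e1] Sloc_elem[OF e2] show False
  proof (elim disjE exE conjE)
    fix l l' assume "e = ed i l" "e = ed j l'" then show False using ij by (simp add: ed_inj)
  qed (use ij vt[of i] vt[of j] i j in \<open>auto simp: ed_ne_rung ed_ne_rung[symmetric] rung_inj\<close>)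
qed

lemma card_Sset: "valid t \<Longrightarrow> card (Sset t) = cost t"
  unfolding Sset_def cost_def
  by (subst card_UN_disjoint) (auto simp: card_Sloc Sloc_disj finite_Sloc)

lemma finite_Sset: "finite (Sset t)"
  unfolding Sset_def by (simp add: finite_Sloc)

lemma Sset_props: "valid t \<Longrightarrow> Sset t \<subseteq> AE (length t) - enc t"
  unfolding Sset_def using Sloc_props by blast

lemma Sset_afs:
  assumes v: "valid t"
  shows "anti_forcing_set (AV (length t)) (AE (length t)) (enc t) (Sset t)"
  unfolding anti_forcing_set_def
proof
  show "Sset t \<subseteq> AE (length t) - enc t" using Sset_props[OF v] .
  show "{M'. perfect_matching (AV (length t)) (AE (length t) - Sset t) M'} = {enc t}"
  proof (rule set_eqI, rule iffI)
    fix M' assume "M' \<in> {M'. perfect_matching (AV (length t)) (AE (length t) - Sset t) M'}"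
    then have pm': "perfect_matching (AV (length t)) (AE (length t) - Sset t) M'" by simp
    then have pm: "perfect_matching (AV (length t)) (AE (length t)) M'" by (rule pm_mono)
    interpret pmloc "length t" M' using pm by unfold_locales
    have "M' \<inter> Sset t = {}" using pm' unfolding perfect_matching_def by blast
    then have "enc (rb M' (length t)) \<inter> Sset t = {}" using rb_enc by simp
    then have "rb M' (length t) = t" using sweep[OF v rb_valid] by (simp add: rb_def)
    then show "M' \<in> {enc t}" using rb_enc by simp
  next
    fix M' assume "M' \<in> {enc t}"
    then show "M' \<in> {M'. perfect_matching (AV (length t)) (AE (length t) - Sset t) M'}"
      using pm_sub[OF enc_pm[OF v refl]] Sset_props[OF v] by blast
  qed
qed


datatype wid = Top nat | Bot nat | Third nat | Single nat

lemma diff_enc: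
  assumes len: "length t' = length t" and e: "e \<in> enc t'" "e \<notin> enc t"
  shows "(\<exists>j l. j < length t \<and> e = ed j l \<and> l \<in> lset (t' ! j) \<and> l \<notin> lset (t ! j))
       \<or> (\<exists>j. j \<le> length t \<and> e = rung j \<and> rung_in t' j \<and> \<not> rung_in t j)"
proof -
  have "e \<in> AE (length t)" using enc_sub[of t'] e len by auto
  then show ?thesis
  proof (rule AE_cases)
    fix j l assume "j < length t" "e = ed j l"
    then show ?thesis using e len by (auto simp: mem_enc_ed)
  next
    fix j assume "j \<le> length t" "e = rung j"
    then show ?thesis using e len by (auto simp: mem_enc_rung)
  qed
qed

lemma nth_upd: "xs[i := x] ! j = (if i = j \<and> i < length xs then x else xs ! j)"
  by (cases "i < length xs") (auto simp: list_update_beyond)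

lemma valid_upd_Hz: "valid t \<Longrightarrow> valid (t[i := Hz a b])"
  unfolding valid_def by (auto simp: nth_upd split: if_splits)

lemma rung_in_upd_HzHz: "t ! i = Hz a b \<Longrightarrow> rung_in (t[i := Hz c d]) j = rung_in t j"
  unfolding rung_in_def by (auto simp: nth_upd split: if_splits)

lemma rung_in_upd_Va: "i < length t \<Longrightarrow> t ! i = Va \<Longrightarrow> rung_in (t[i := Hz c d]) j \<noteq> rung_in t j \<Longrightarrow> j = i"
  unfolding rung_in_def by (auto simp: nth_upd split: if_splits)

lemma rung_in_upd_Vb: "i < length t \<Longrightarrow> t ! i = Vb \<Longrightarrow> rung_in (t[i := Hz c d]) j \<noteq> rung_in t j \<Longrightarrow> j = Suc i"
  unfolding rung_in_def by (auto simp: nth_upd split: if_splits)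

definition topL :: "le set" where "topL = {T12, T23, T1U, T3U, U12, U23}"
definition botL :: "le set" where "botL = {B12, B23, B1D, B3D, D12, D23}"

definition nxt :: "ty list \<Rightarrow> nat \<Rightarrow> nat" where
  "nxt t j = (LEAST m. j < m \<and> t ! m \<noteq> Vb)"
definition prv :: "ty list \<Rightarrow> nat \<Rightarrow> nat" where
  "prv t j = (GREATEST m. m < j \<and> t ! m \<noteq> Va)"

definition ownE :: "ty list \<Rightarrow> nat \<Rightarrow> le \<Rightarrow> wid" where
  "ownE t j l = (case t ! j of
     Hz a b \<Rightarrow> (if l \<in> topL then Top j else if l \<in> botL then Bot j else Third j)
   | Vb \<Rightarrow> (if l \<in> {U23, D23} then Single j else Third (nxt t j))
   | Va \<Rightarrow> (if l \<in> {U12, D12} then Single j else Third (prv t j)))"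

definition ownR :: "ty list \<Rightarrow> nat \<Rightarrow> wid" where
  "ownR t j = (if j < length t \<and> t ! j = Va then Single j else Single (j - 1))"

definition kL :: "ty list \<Rightarrow> nat \<Rightarrow> nat" where
  "kL t i = (LEAST k. \<forall>m. k \<le> m \<and> m < i \<longrightarrow> t ! m = Vb)"

definition KR :: "ty list \<Rightarrow> nat \<Rightarrow> nat" where
  "KR t i = i + (LEAST d. \<not> (i + d + 1 < length t \<and> t ! (i + d + 1) = Va))"

definition chainL :: "ty list \<Rightarrow> nat \<Rightarrow> ty list" where
  "chainL t i = map (\<lambda>j. if kL t i \<le> j \<and> j \<le> i then Va else t ! j) [0..<length t]"

definition chainR :: "ty list \<Rightarrow> nat \<Rightarrow> ty list" where
  "chainR t i = map (\<lambda>j. if i \<le> j \<and> j \<le> KR t i then Vb else t ! j) [0..<length t]"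

fun wit :: "ty list \<Rightarrow> wid \<Rightarrow> ty list" where
  "wit t (Top i) = t[i := (case t ! i of Hz a b \<Rightarrow> Hz (\<not> a) b | x \<Rightarrow> x)]"
| "wit t (Bot i) = t[i := (case t ! i of Hz a b \<Rightarrow> Hz a (\<not> b) | x \<Rightarrow> x)]"
| "wit t (Single i) = t[i := (if t ! i = Va then Hz True True else Hz False False)]"
| "wit t (Third i) = (if t ! i = Hz True True then chainL t i else chainR t i)"

fun idloc :: "nat \<Rightarrow> ty \<Rightarrow> wid set" where
  "idloc i (Hz a b) = {Top i, Bot i} \<union> (if a = b then {Third i} else {})"
| "idloc i Va = {Single i}"
| "idloc i Vb = {Single i}"

definition ids :: "ty list \<Rightarrow> wid set" where
  "ids t = (\<Union>i<length t. idloc i (t ! i))"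

lemma card_idloc: "card (idloc i x) = cty x"
  by (cases x) (auto simp: card_insert_if)

lemma finite_idloc: "finite (idloc i x)"
  by (cases x) auto

lemma idloc_elem: "w \<in> idloc i x \<Longrightarrow> w \<in> {Top i, Bot i, Third i, Single i}"
  by (cases x) (auto split: if_splits)

lemma card_ids: "card (ids t) = cost t"
  unfolding ids_def cost_def
  by (subst card_UN_disjoint) (auto simp: card_idloc finite_idloc dest!: idloc_elem)

lemma finite_ids: "finite (ids t)"
  unfolding ids_def by (simp add: finite_idloc)

definition good :: "ty list \<Rightarrow> wid \<Rightarrow> ty list \<Rightarrow> bool" where
  "good t w t' = (valid t' \<and> length t' = length t \<and> (\<exists>e. e \<in> enc t' \<and> e \<notin> enc t) \<and>
     (\<forall>e. e \<in> enc t' \<longrightarrow> e \<notin> enc t \<longrightarrow> (\<exists>j l. e = ed j l \<and> ownE t j l = w) \<or> (\<exists>j. e = rung j \<and> ownR t j = w)))"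

lemma lset_diff_top: "l \<in> lset (Hz (\<not> a) b) \<Longrightarrow> l \<notin> lset (Hz a b) \<Longrightarrow> l \<in> topL"
  by (cases a; cases b) (auto simp: lset_def topL_def)

lemma lset_diff_bot: "l \<in> lset (Hz a (\<not> b)) \<Longrightarrow> l \<notin> lset (Hz a b) \<Longrightarrow> l \<in> botL"
  by (cases a; cases b) (auto simp: lset_def botL_def)

lemma topL_botL: "l \<in> topL \<Longrightarrow> l \<notin> botL"
  by (auto simp: topL_def botL_def)

lemma good_Top:
  assumes v: "valid t" and i: "i < length t" and ti: "t ! i = Hz a b"
  shows "good t (Top i) (wit t (Top i))"
proof -
  have w: "wit t (Top i) = t[i := Hz (\<not> a) b]" using ti by simp
  let ?t' = "t[i := Hz (\<not> a) b]"
  have "ed i (if a then T23 else T12) \<in> enc ?t' \<and> ed i (if a then T23 else T12) \<notin> enc t"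
    using i ti by (cases a; cases b) (auto simp: mem_enc_ed lset_def)
  moreover have "(\<exists>j l. e = ed j l \<and> ownE t j l = Top i) \<or> (\<exists>j. e = rung j \<and> ownR t j = Top i)"
    if e: "e \<in> enc ?t'" "e \<notin> enc t" for e
  proof -
    from diff_enc[OF length_list_update e] show ?thesis
    proof (elim disjE exE conjE)
      fix j l assume j: "j < length t" "e = ed j l" "l \<in> lset (?t' ! j)" "l \<notin> lset (t ! j)"
      then have "j = i" by (auto simp: nth_upd split: if_splits)
      then have "l \<in> topL" using j i ti lset_diff_top[of l a b] by simp
      then have "ownE t i l = Top i" using ti by (simp add: ownE_def)
      then show ?thesis using j \<open>j = i\<close> by blast
    next
      fix j assume "rung_in ?t' j" "\<not> rung_in t j"
      then show ?thesis using rung_in_upd_HzHz[OF ti] by simp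
    qed
  qed
  ultimately show ?thesis unfolding good_def w
    apply (intro conjI)
       apply (rule valid_upd_Hz[OF v])
      apply simp
     apply blast
    apply blast
    done
qed

lemma good_Bot:
  assumes v: "valid t" and i: "i < length t" and ti: "t ! i = Hz a b"
  shows "good t (Bot i) (wit t (Bot i))"
proof -
  have w: "wit t (Bot i) = t[i := Hz a (\<not> b)]" using ti by simp
  let ?t' = "t[i := Hz a (\<not> b)]"
  have "ed i (if b then B23 else B12) \<in> enc ?t' \<and> ed i (if b then B23 else B12) \<notin> enc t"
    using i ti by (cases a; cases b) (auto simp: mem_enc_ed lset_def)
  moreover have "(\<exists>j l. e = ed j l \<and> ownE t j l = Bot i) \<or> (\<exists>j. e = rung j \<and> ownR t j = Bot i)"
    if e: "e \<in> enc ?t'" "e \<notin> enc t" for e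
  proof -
    from diff_enc[OF length_list_update e] show ?thesis
    proof (elim disjE exE conjE)
      fix j l assume j: "j < length t" "e = ed j l" "l \<in> lset (?t' ! j)" "l \<notin> lset (t ! j)"
      then have "j = i" by (auto simp: nth_upd split: if_splits)
      then have "l \<in> botL" using j i ti lset_diff_bot[of l a b] by simp
      then have "l \<notin> topL" by (auto simp: topL_def botL_def)
      then have "ownE t i l = Bot i" using ti \<open>l \<in> botL\<close> by (simp add: ownE_def)
      then show ?thesis using j \<open>j = i\<close> by blast
    next
      fix j assume "rung_in ?t' j" "\<not> rung_in t j"
      then show ?thesis using rung_in_upd_HzHz[OF ti] by simp
    qed
  qed
  ultimately show ?thesis unfolding good_def w
    apply (intro conjI)
       apply (rule valid_upd_Hz[OF v])
      apply simp
     apply blast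
    apply blast
    done
qed

lemma good_SingleA:
  assumes v: "valid t" and i: "i < length t" and ti: "t ! i = Va"
  shows "good t (Single i) (wit t (Single i))"
proof -
  have w: "wit t (Single i) = t[i := Hz True True]" using ti by simp
  let ?t' = "t[i := Hz True True]"
  have "ed i U12 \<in> enc ?t' \<and> ed i U12 \<notin> enc t"
    using i ti by (auto simp: mem_enc_ed lset_def)
  moreover have "(\<exists>j l. e = ed j l \<and> ownE t j l = Single i) \<or> (\<exists>j. e = rung j \<and> ownR t j = Single i)"
    if e: "e \<in> enc ?t'" "e \<notin> enc t" for e
  proof -
    from diff_enc[OF length_list_update e] show ?thesis
    proof (elim disjE exE conjE)
      fix j l assume j: "j < length t" "e = ed j l" "l \<in> lset (?t' ! j)" "l \<notin> lset (t ! j)"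
      then have "j = i" by (auto simp: nth_upd split: if_splits)
      then have "l \<in> {U12, D12}" using j i ti by (auto simp: lset_def)
      then have "ownE t i l = Single i" using ti by (auto simp: ownE_def)
      then show ?thesis using j \<open>j = i\<close> by blast
    next
      fix j assume "j \<le> length t" "e = rung j" "rung_in ?t' j" "\<not> rung_in t j"
      then have "j = i" using rung_in_upd_Va[OF i ti, of True True j] by auto
      then have "ownR t j = Single i" using i ti by (simp add: ownR_def)
      then show ?thesis using \<open>e = rung j\<close> by blast
    qed
  qed
  ultimately show ?thesis unfolding good_def w
    apply (intro conjI)
       apply (rule valid_upd_Hz[OF v])
      apply simp
     apply blast
    apply blast
    done
qed

lemma good_SingleB:
  assumes v: "valid t" and i: "i < length t" and ti: "t ! i = Vb"
  shows "good t (Single i) (wit t (Single i))"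
proof -
  have w: "wit t (Single i) = t[i := Hz False False]" using ti by simp
  let ?t' = "t[i := Hz False False]"
  have vt: "Suc i < length t \<Longrightarrow> t ! Suc i \<noteq> Va" using v ti unfolding valid_def by blast
  have "ed i U23 \<in> enc ?t' \<and> ed i U23 \<notin> enc t"
    using i ti by (auto simp: mem_enc_ed lset_def)
  moreover have "(\<exists>j l. e = ed j l \<and> ownE t j l = Single i) \<or> (\<exists>j. e = rung j \<and> ownR t j = Single i)"
    if e: "e \<in> enc ?t'" "e \<notin> enc t" for e
  proof -
    from diff_enc[OF length_list_update e] show ?thesis
    proof (elim disjE exE conjE)
      fix j l assume j: "j < length t" "e = ed j l" "l \<in> lset (?t' ! j)" "l \<notin> lset (t ! j)"
      then have "j = i" by (auto simp: nth_upd split: if_splits)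
      then have "l \<in> {U23, D23}" using j i ti by (auto simp: lset_def)
      then have "ownE t i l = Single i" using ti by (auto simp: ownE_def)
      then show ?thesis using j \<open>j = i\<close> by blast
    next
      fix j assume "j \<le> length t" "e = rung j" "rung_in ?t' j" "\<not> rung_in t j"
      then have "j = Suc i" using rung_in_upd_Vb[OF i ti, of False False j] by auto
      then have "ownR t j = Single i" using vt by (simp add: ownR_def)
      then show ?thesis using \<open>e = rung j\<close> by blast
    qed
  qed
  ultimately show ?thesis unfolding good_def w
    apply (intro conjI)
       apply (rule valid_upd_Hz[OF v])
      apply simp
     apply blast
    apply blast
    done
qed


lemma kL_props:
  shows "kL t i \<le> i" "\<And>m. kL t i \<le> m \<Longrightarrow> m < i \<Longrightarrow> t ! m = Vb"
    "0 < kL t i \<Longrightarrow> t ! (kL t i - 1) \<noteq> Vb"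
proof -
  let ?P = "\<lambda>k. \<forall>m. k \<le> m \<and> m < i \<longrightarrow> t ! m = Vb"
  have Pi: "?P i" by auto
  show "kL t i \<le> i" unfolding kL_def using Pi by (rule Least_le)
  have Pk: "?P (kL t i)" unfolding kL_def using Pi by (rule LeastI)
  then show "\<And>m. kL t i \<le> m \<Longrightarrow> m < i \<Longrightarrow> t ! m = Vb" by blast
  show "0 < kL t i \<Longrightarrow> t ! (kL t i - 1) \<noteq> Vb"
  proof
    assume "0 < kL t i" "t ! (kL t i - 1) = Vb"
    have "?P (kL t i - 1)"
    proof (intro allI impI)
      fix m assume m: "kL t i - 1 \<le> m \<and> m < i"
      show "t ! m = Vb"
      proof (cases "m = kL t i - 1")
        case True then show ?thesis using \<open>t ! (kL t i - 1) = Vb\<close> by simp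
      next
        case False then have "kL t i \<le> m" using m \<open>0 < kL t i\<close> by linarith
        then show ?thesis using Pk m by blast
      qed
    qed
    then have "kL t i \<le> kL t i - 1" unfolding kL_def by (rule Least_le)
    then show False using \<open>0 < kL t i\<close> by simp
  qed
qed

lemma KR_props:
  assumes i: "i < length t"
  shows "i \<le> KR t i" "KR t i < length t" "\<And>m. i < m \<Longrightarrow> m \<le> KR t i \<Longrightarrow> t ! m = Va"
    "\<not> (Suc (KR t i) < length t \<and> t ! Suc (KR t i) = Va)"
proof -
  let ?P = "\<lambda>d. \<not> (i + d + 1 < length t \<and> t ! (i + d + 1) = Va)"
  define d where "d = (LEAST d. ?P d)"
  have K: "KR t i = i + d" unfolding KR_def d_def by simp
  have Pn: "?P (length t)" by auto
  have Pd: "?P d" unfolding d_def using Pn by (rule LeastI)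
  have lt: "d' < d \<Longrightarrow> i + d' + 1 < length t \<and> t ! (i + d' + 1) = Va" for d'
    using not_less_Least[of d' ?P] unfolding d_def by blast
  show "i \<le> KR t i" using K by simp
  show "KR t i < length t"
  proof (cases d)
    case 0 then show ?thesis using K i by simp
  next
    case (Suc d') then show ?thesis using K lt[of d'] by simp
  qed
  show "\<And>m. i < m \<Longrightarrow> m \<le> KR t i \<Longrightarrow> t ! m = Va"
  proof -
    fix m assume "i < m" "m \<le> KR t i"
    then have "m - i - 1 < d" "i + (m - i - 1) + 1 = m" using K by auto
    then show "t ! m = Va" using lt[of "m - i - 1"] by simp
  qed
  show "\<not> (Suc (KR t i) < length t \<and> t ! Suc (KR t i) = Va)" using Pd K by simp
qed

lemma chainL_nth: "j < length t \<Longrightarrow> chainL t i ! j = (if kL t i \<le> j \<and> j \<le> i then Va else t ! j)"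
  unfolding chainL_def by simp

lemma chainR_nth: "j < length t \<Longrightarrow> chainR t i ! j = (if i \<le> j \<and> j \<le> KR t i then Vb else t ! j)"
  unfolding chainR_def by simp

lemma good_ThirdL:
  assumes v: "valid t" and i: "i < length t" and ti: "t ! i = Hz True True"
  shows "good t (Third i) (wit t (Third i))"
proof -
  let ?k = "kL t i"
  let ?t' = "chainL t i"
  have w: "wit t (Third i) = ?t'" using ti by simp
  have len: "length ?t' = length t" unfolding chainL_def by simp
  note kp = kL_props[of t i]
  have vt: "\<And>m. Suc m < length t \<Longrightarrow> t ! m = Vb \<Longrightarrow> t ! Suc m \<noteq> Va" using v unfolding valid_def by blast
  have nth': "\<And>j. j < length t \<Longrightarrow> ?t' ! j = (if ?k \<le> j \<and> j \<le> i then Va else t ! j)" by (rule chainL_nth)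
  have valid': "valid ?t'"
    unfolding valid_def
  proof (intro allI impI notI)
    fix m assume m: "Suc m < length ?t'" and h: "?t' ! m = Vb \<and> ?t' ! Suc m = Va"
    then have m': "Suc m < length t" using len by simp
    have n1: "?t' ! m = (if ?k \<le> m \<and> m \<le> i then Va else t ! m)" using nth'[of m] m' by simp
    have n2: "?t' ! Suc m = (if ?k \<le> Suc m \<and> Suc m \<le> i then Va else t ! Suc m)" using nth'[of "Suc m"] m' by simp
    have a: "\<not> (?k \<le> m \<and> m \<le> i)" "t ! m = Vb" using h n1 by (auto split: if_splits)
    show False
    proof (cases "?k \<le> Suc m \<and> Suc m \<le> i")
      case True
      then have "Suc m = ?k" using a(1) by auto
      then have "0 < ?k" "m = ?k - 1" by auto
      then show False using kp(3) a(2) by simp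
    next
      case False
      then have "t ! Suc m = Va" using h n2 by (auto split: if_splits)
      then show False using vt[OF m' a(2)] by simp
    qed
  qed
  have e0: "ed i MR \<in> enc ?t' \<and> ed i MR \<notin> enc t"
    using i ti nth'[of i] kp(1) len by (auto simp: mem_enc_ed lset_def)
  have own: "(\<exists>j l. e = ed j l \<and> ownE t j l = Third i) \<or> (\<exists>j. e = rung j \<and> ownR t j = Third i)"
    if e: "e \<in> enc ?t'" "e \<notin> enc t" for e
  proof -
    from diff_enc[OF len e] show ?thesis
    proof (elim disjE exE conjE)
      fix j l assume j: "j < length t" "e = ed j l" "l \<in> lset (?t' ! j)" "l \<notin> lset (t ! j)"
      have jin: "?k \<le> j \<and> j \<le> i" using j nth'[of j] by (auto split: if_splits)
      then have lva: "l \<in> lset Va" using j nth'[of j] by simp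
      show ?thesis
      proof (cases "j = i")
        case True
        then have "l \<notin> topL \<and> l \<notin> botL" using lva j ti by (auto simp: lset_def topL_def botL_def)
        then have "ownE t j l = Third i" using ti True by (simp add: ownE_def)
        then show ?thesis using j by blast
      next
        case False
        then have jl: "j < i" using jin by simp
        then have tj: "t ! j = Vb" using kp(2) jin by simp
        then have "l \<notin> {U23, D23}" using lva by (auto simp: lset_def)
        moreover have "nxt t j = i"
          unfolding nxt_def
        proof (rule Least_equality)
          show "j < i \<and> t ! i \<noteq> Vb" using jl ti by simp
        next
          fix m assume "j < m \<and> t ! m \<noteq> Vb"
          then show "i \<le> m" using kp(2)[of m] jin by (meson le_less_trans less_imp_le not_le)
        qed
        ultimately have "ownE t j l = Third i" using tj by (simp add: ownE_def)
        then show ?thesis using j by blast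
      qed
    next
      fix j assume j: "j \<le> length t" "e = rung j" "rung_in ?t' j" "\<not> rung_in t j"
      have r1: "\<not> (j < length t \<and> ?t' ! j = Va)" and r2: "\<not> (0 < j \<and> j \<le> length t \<and> ?t' ! (j - 1) = Vb)"
        using j(3) len unfolding rung_in_def by auto
      have "\<not> (j < length t \<and> t ! j = Va)"
        using r1 nth'[of j] by (auto split: if_splits)
      moreover have "\<not> (0 < j \<and> j \<le> length t \<and> t ! (j - 1) = Vb)"
      proof
        assume h: "0 < j \<and> j \<le> length t \<and> t ! (j - 1) = Vb"
        show False
        proof (cases "?k \<le> j - 1 \<and> j - 1 \<le> i")
          case True
          then show False
          proof (cases "j - 1 = i")
            case True then show False using h ti by simp
          next
            case False
            then have "j < length t" "?k \<le> j \<and> j \<le> i" using True h i by auto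
            then show False using r1 nth'[of j] by simp
          qed
        next
          case False
          have "j - 1 < length t" using h by linarith
          then have "?t' ! (j - 1) = t ! (j - 1)" using nth'[of "j - 1"] False by auto
          then show False using r2 h by simp
        qed
      qed
      ultimately have "rung_in t j" unfolding rung_in_def by blast
      then show ?thesis using j(4) by simp
    qed
  qed
  show ?thesis unfolding good_def w
    apply (intro conjI)
       apply (rule valid')
      apply (rule len)
    using e0 apply blast
    using own apply blast
    done
qed

lemma good_ThirdR:
  assumes v: "valid t" and i: "i < length t" and ti: "t ! i = Hz False False"
  shows "good t (Third i) (wit t (Third i))"
proof -
  let ?K = "KR t i"
  let ?t' = "chainR t i"
  have w: "wit t (Third i) = ?t'" using ti by simp
  have len: "length ?t' = length t" unfolding chainR_def by simp
  note kp = KR_props[OF i]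
  have vt: "\<And>m. Suc m < length t \<Longrightarrow> t ! m = Vb \<Longrightarrow> t ! Suc m \<noteq> Va" using v unfolding valid_def by blast
  have nth': "\<And>j. j < length t \<Longrightarrow> ?t' ! j = (if i \<le> j \<and> j \<le> ?K then Vb else t ! j)" by (rule chainR_nth)
  have valid': "valid ?t'"
    unfolding valid_def
  proof (intro allI impI notI)
    fix m assume m: "Suc m < length ?t'" and h: "?t' ! m = Vb \<and> ?t' ! Suc m = Va"
    then have m': "Suc m < length t" using len by simp
    have n1: "?t' ! m = (if i \<le> m \<and> m \<le> ?K then Vb else t ! m)" using nth'[of m] m' by simp
    have n2: "?t' ! Suc m = (if i \<le> Suc m \<and> Suc m \<le> ?K then Vb else t ! Suc m)" using nth'[of "Suc m"] m' by simp
    have a: "\<not> (i \<le> Suc m \<and> Suc m \<le> ?K)" "t ! Suc m = Va" using h n2 by (auto split: if_splits)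
    show False
    proof (cases "i \<le> m \<and> m \<le> ?K")
      case True
      then have "m = ?K" using a(1) by auto
      then show False using kp(4) a(2) m' by auto
    next
      case False
      then have "t ! m = Vb" using h n1 by (auto split: if_splits)
      then show False using vt[OF m'] a(2) by simp
    qed
  qed
  have e0: "ed i MR \<in> enc ?t' \<and> ed i MR \<notin> enc t"
    using i ti nth'[of i] kp(1) len by (auto simp: mem_enc_ed lset_def)
  have own: "(\<exists>j l. e = ed j l \<and> ownE t j l = Third i) \<or> (\<exists>j. e = rung j \<and> ownR t j = Third i)"
    if e: "e \<in> enc ?t'" "e \<notin> enc t" for e
  proof -
    from diff_enc[OF len e] show ?thesis
    proof (elim disjE exE conjE)
      fix j l assume j: "j < length t" "e = ed j l" "l \<in> lset (?t' ! j)" "l \<notin> lset (t ! j)"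
      have jin: "i \<le> j \<and> j \<le> ?K" using j nth'[of j] by (auto split: if_splits)
      then have lvb: "l \<in> lset Vb" using j nth'[of j] by simp
      show ?thesis
      proof (cases "j = i")
        case True
        then have "l \<notin> topL \<and> l \<notin> botL" using lvb j ti by (auto simp: lset_def topL_def botL_def)
        then have "ownE t j l = Third i" using ti True by (simp add: ownE_def)
        then show ?thesis using j by blast
      next
        case False
        then have jl: "i < j" using jin by simp
        then have tj: "t ! j = Va" using kp(3) jin by simp
        then have "l \<notin> {U12, D12}" using lvb by (auto simp: lset_def)
        moreover have "prv t j = i"
          unfolding prv_def
        proof (rule Greatest_equality)
          show "i < j \<and> t ! i \<noteq> Va" using jl ti by simp
        next
          fix m assume "m < j \<and> t ! m \<noteq> Va"
          then show "m \<le> i" using kp(3)[of m] jin by (meson le_trans less_imp_le not_le)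
        qed
        ultimately have "ownE t j l = Third i" using tj by (simp add: ownE_def)
        then show ?thesis using j by blast
      qed
    next
      fix j assume j: "j \<le> length t" "e = rung j" "rung_in ?t' j" "\<not> rung_in t j"
      have r1: "\<not> (j < length t \<and> ?t' ! j = Va)" and r2: "\<not> (0 < j \<and> j \<le> length t \<and> ?t' ! (j - 1) = Vb)"
        using j(3) len unfolding rung_in_def by auto
      have "\<not> (j < length t \<and> t ! j = Va)"
      proof
        assume h: "j < length t \<and> t ! j = Va"
        show False
        proof (cases "i \<le> j \<and> j \<le> ?K")
          case True
          then show False
          proof (cases "j = i")
            case True then show False using h ti by simp
          next
            case False
            then have "0 < j" "j \<le> length t" "i \<le> j - 1 \<and> j - 1 \<le> ?K" using True h by auto
            moreover have "j - 1 < length t" using h by linarith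
            ultimately show False using r2 nth'[of "j - 1"] by auto
          qed
        next
          case False
          then show False using r1 h nth'[of j] by (auto split: if_splits)
        qed
      qed
      moreover have "\<not> (0 < j \<and> j \<le> length t \<and> t ! (j - 1) = Vb)"
        using r2 nth'[of "j - 1"] by (auto split: if_splits)
      ultimately have "rung_in t j" unfolding rung_in_def by blast
      then show ?thesis using j(4) by simp
    qed
  qed
  show ?thesis unfolding good_def w
    apply (intro conjI)
       apply (rule valid')
      apply (rule len)
    using e0 apply blast
    using own apply blast
    done
qed


lemma good_all:
  assumes v: "valid t" and w: "w \<in> ids t"
  shows "good t w (wit t w)"
proof -
  obtain i where i: "i < length t" and wi: "w \<in> idloc i (t ! i)" using w unfolding ids_def by blast
  show ?thesis
  proof (cases "t ! i")
    case (Hz a b)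
    then have "w = Top i \<or> w = Bot i \<or> (a = b \<and> w = Third i)" using wi by (auto split: if_splits)
    then show ?thesis
    proof (elim disjE conjE)
      assume "w = Top i" then show ?thesis using good_Top[OF v i Hz] by simp
    next
      assume "w = Bot i" then show ?thesis using good_Bot[OF v i Hz] by simp
    next
      assume "a = b" "w = Third i"
      then show ?thesis using good_ThirdL[OF v i] good_ThirdR[OF v i] Hz by (cases a) auto
    qed
  next
    case Va
    then show ?thesis using wi good_SingleA[OF v i] by simp
  next
    case Vb
    then show ?thesis using wi good_SingleB[OF v i] by simp
  qed
qed

lemma af_enc:
  assumes v: "valid t"
  shows "anti_forcing_number (AV (length t)) (AE (length t)) (enc t) = cost t"
proof (rule af_exact)
  show "anti_forcing_set (AV (length t)) (AE (length t)) (enc t) (Sset t)" by (rule Sset_afs[OF v])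
  show "finite (Sset t)" by (rule finite_Sset)
  show "card (Sset t) = cost t" by (rule card_Sset[OF v])
next
  fix S assume afs: "anti_forcing_set (AV (length t)) (AE (length t)) (enc t) S" and fin: "finite S"
  have g: "\<And>w. w \<in> ids t \<Longrightarrow> good t w (wit t w)" using good_all[OF v] .
  have "card (ids t) \<le> card S"
  proof (rule af_lower[OF afs fin finite_ids])
    fix w assume w: "w \<in> ids t"
    then have gw: "good t w (wit t w)" by (rule g)
    then have "valid (wit t w)" "length (wit t w) = length t" unfolding good_def by auto
    then show "perfect_matching (AV (length t)) (AE (length t)) (enc (wit t w))"
      using enc_pm by metis
    show "enc (wit t w) - enc t \<noteq> {}" using gw unfolding good_def by blast
  next
    fix w1 w2 assume w1: "w1 \<in> ids t" and w2: "w2 \<in> ids t" and ne: "w1 \<noteq> w2"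
    show "(enc (wit t w1) - enc t) \<inter> (enc (wit t w2) - enc t) = {}"
    proof (rule ccontr)
      assume "(enc (wit t w1) - enc t) \<inter> (enc (wit t w2) - enc t) \<noteq> {}"
      then obtain e where e1: "e \<in> enc (wit t w1)" "e \<notin> enc t" and e2: "e \<in> enc (wit t w2)" by blast
      have o1: "(\<exists>j l. e = ed j l \<and> ownE t j l = w1) \<or> (\<exists>j. e = rung j \<and> ownR t j = w1)"
        using g[OF w1] e1 unfolding good_def by blast
      have o2: "(\<exists>j l. e = ed j l \<and> ownE t j l = w2) \<or> (\<exists>j. e = rung j \<and> ownR t j = w2)"
        using g[OF w2] e2 e1(2) unfolding good_def by blast
      from o1 o2 show False
      proof (elim disjE exE conjE)
        fix j l j' l' assume "e = ed j l" "ownE t j l = w1" "e = ed j' l'" "ownE t j' l' = w2"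
        then show False using ne by (auto simp: ed_inj)
      next
        fix j l j' assume "e = ed j l" "e = rung j'"
        then show False using ed_ne_rung[of j l j'] by simp
      next
        fix j l j' assume "e = rung j'" "e = ed j l"
        then show False using ed_ne_rung[of j l j'] by simp
      next
        fix j j' assume "e = rung j" "ownR t j = w1" "e = rung j'" "ownR t j' = w2"
        then show False using ne by (auto simp: rung_inj)
      qed
    qed
  qed
  then show "cost t \<le> card S" using card_ids by simp
qed

definition Wn :: "nat \<Rightarrow> ty list set" where
  "Wn n = {t. length t = n \<and> valid t}"

lemma pms_enc: "{M. perfect_matching (AV n) (AE n) M} = enc ` Wn n"
proof (rule set_eqI, rule iffI)
  fix M assume "M \<in> {M. perfect_matching (AV n) (AE n) M}"
  then have pm: "perfect_matching (AV n) (AE n) M" by simp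
  interpret pmloc n M using pm by unfold_locales
  have "rb M n \<in> Wn n" unfolding Wn_def using rb_valid by (simp add: rb_def)
  then show "M \<in> enc ` Wn n" using rb_enc by (metis image_eqI)
next
  fix M assume "M \<in> enc ` Wn n"
  then obtain t where "t \<in> Wn n" "M = enc t" by blast
  then show "M \<in> {M. perfect_matching (AV n) (AE n) M}" using enc_pm unfolding Wn_def by blast
qed

lemma inj_enc: "inj_on enc (Wn n)"
proof (rule inj_onI)
  fix t t' assume "t \<in> Wn n" "t' \<in> Wn n" "enc t = enc t'"
  then have "rb (enc t) (length t) = rb (enc t') (length t')" unfolding Wn_def by simp
  then show "t = t'" by (simp add: rb_of_enc)
qed

lemma afpoly_words: "anti_forcing_poly (AV n) (AE n) = (\<Sum>t\<in>Wn n. monom 1 (cost t))"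
  unfolding anti_forcing_poly_def pms_enc
  by (subst sum.reindex[OF inj_enc]) (auto intro!: sum.cong simp: Wn_def af_enc)


lemma ty_UNIV: "(UNIV :: ty set) = {Hz True True, Hz True False, Hz False True, Hz False False, Va, Vb}"
proof (rule set_eqI)
  fix x :: ty show "x \<in> UNIV \<longleftrightarrow> x \<in> {Hz True True, Hz True False, Hz False True, Hz False False, Va, Vb}"
    by (cases x) auto
qed

lemma finite_ty: "finite (UNIV :: ty set)"
  by (simp add: ty_UNIV)

lemma finite_Wn: "finite (Wn n)"
proof -
  have "Wn n \<subseteq> {xs. set xs \<subseteq> UNIV \<and> length xs = n}" unfolding Wn_def by auto
  moreover have "finite {xs. set xs \<subseteq> (UNIV :: ty set) \<and> length xs = n}"
    using finite_lists_length_eq[OF finite_ty] by simp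
  ultimately show ?thesis by (rule finite_subset)
qed

lemma valid_Cons: "valid (c # t) \<longleftrightarrow> valid t \<and> \<not> (c = Vb \<and> t \<noteq> [] \<and> hd t = Va)"
proof
  assume v: "valid (c # t)"
  have "valid t" unfolding valid_def
  proof (intro allI impI)
    fix i assume "Suc i < length t"
    then show "\<not> (t ! i = Vb \<and> t ! Suc i = Va)" using v unfolding valid_def
      by (metis Suc_less_eq length_Cons nth_Cons_Suc)
  qed
  moreover have "\<not> (c = Vb \<and> t \<noteq> [] \<and> hd t = Va)"
  proof
    assume h: "c = Vb \<and> t \<noteq> [] \<and> hd t = Va"
    then have "Suc 0 < length (c # t)" "(c # t) ! 0 = Vb" "(c # t) ! Suc 0 = Va"
      by (auto simp: hd_conv_nth)
    then show False using v unfolding valid_def by blast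
  qed
  ultimately show "valid t \<and> \<not> (c = Vb \<and> t \<noteq> [] \<and> hd t = Va)" by blast
next
  assume h: "valid t \<and> \<not> (c = Vb \<and> t \<noteq> [] \<and> hd t = Va)"
  show "valid (c # t)" unfolding valid_def
  proof (intro allI impI)
    fix i assume i: "Suc i < length (c # t)"
    show "\<not> ((c # t) ! i = Vb \<and> (c # t) ! Suc i = Va)"
    proof (cases i)
      case 0
      then show ?thesis using h i by (auto simp: hd_conv_nth)
    next
      case (Suc k)
      then show ?thesis using h i unfolding valid_def by auto
    qed
  qed
qed

lemma cost_Cons: "cost (c # t) = cty c + cost t"
  unfolding cost_def length_Cons sum.lessThan_Suc_shift by simp

definition Hs :: "nat \<Rightarrow> ty set \<Rightarrow> int poly" where
  "Hs n C = (\<Sum>t\<in>{t \<in> Wn n. t = [] \<or> hd t \<in> C}. monom 1 (cost t))"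

definition G :: "nat \<Rightarrow> ty \<Rightarrow> int poly" where
  "G n c = (if c = Vb then Hs n (- {Va}) else Hs n UNIV)"

lemma Hs_Suc: "Hs (Suc n) C = (\<Sum>c\<in>C. monom 1 (cty c) * G n c)"
proof -
  let ?cond = "\<lambda>c t. c = Vb \<longrightarrow> t = [] \<or> hd t \<noteq> Va"
  let ?S = "Sigma C (\<lambda>c. {t \<in> Wn n. ?cond c t})"
  let ?f = "\<lambda>p. fst p # snd p"
  have eq: "{t \<in> Wn (Suc n). t = [] \<or> hd t \<in> C} = ?f ` ?S"
  proof (rule set_eqI, rule iffI)
    fix t assume "t \<in> {t \<in> Wn (Suc n). t = [] \<or> hd t \<in> C}"
    then have t: "length t = Suc n" "valid t" "t = [] \<or> hd t \<in> C" unfolding Wn_def by auto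
    then obtain c t' where ct: "t = c # t'" by (cases t) auto
    have "(c, t') \<in> ?S" using t ct valid_Cons[of c t'] unfolding Wn_def by auto
    then show "t \<in> ?f ` ?S" using ct by force
  next
    fix t assume "t \<in> ?f ` ?S"
    then obtain c t' where "t = c # t'" "c \<in> C" "t' \<in> Wn n" "?cond c t'" by auto
    then show "t \<in> {t \<in> Wn (Suc n). t = [] \<or> hd t \<in> C}" using valid_Cons[of c t'] unfolding Wn_def by auto
  qed
  have inj: "inj_on ?f ?S" by (rule inj_onI) auto
  have finS: "\<And>c. finite {t \<in> Wn n. ?cond c t}" using finite_Wn by simp
  have G': "\<And>c. G n c = (\<Sum>t\<in>{t \<in> Wn n. ?cond c t}. monom 1 (cost t))"
  proof -
    fix c
    show "G n c = (\<Sum>t\<in>{t \<in> Wn n. ?cond c t}. monom 1 (cost t))"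
      unfolding G_def Hs_def by (cases "c = Vb") (auto intro!: sum.cong)
  qed
  have "Hs (Suc n) C = (\<Sum>p\<in>?S. monom 1 (cost (?f p)))"
    unfolding Hs_def eq by (rule sum.reindex[OF inj, unfolded comp_def])
  also have "\<dots> = (\<Sum>(c, t)\<in>?S. monom 1 (cost (c # t)))"
    by (rule sum.cong) auto
  also have "\<dots> = (\<Sum>c\<in>C. \<Sum>t\<in>{t \<in> Wn n. ?cond c t}. monom 1 (cost (c # t)))"
    by (rule sum.Sigma[symmetric]) (use finite_subset[OF subset_UNIV finite_ty] finS in auto)
  also have "\<dots> = (\<Sum>c\<in>C. monom 1 (cty c) * G n c)"
    by (rule sum.cong) (simp_all add: G' cost_Cons sum_distrib_left mult_monom)
  finally show ?thesis .
qed


definition cheb :: "'a::comm_ring_1 \<Rightarrow> 'a \<Rightarrow> nat \<Rightarrow> 'a" where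
  "cheb a b n = (\<Sum>k\<le>n. (-1)^k * of_nat ((n - k) choose k) * a^(n - 2*k) * b^k)"

lemma cheb0: "cheb a b 0 = 1"
  unfolding cheb_def by simp

lemma cheb1: "cheb a b (Suc 0) = a"
  unfolding cheb_def by simp

lemma pascal': "k \<le> Suc n \<Longrightarrow> ((Suc n - k) choose Suc k) = ((n - k) choose Suc k) + ((n - k) choose k)"
proof (cases "k \<le> n")
  case True
  then have "Suc n - k = Suc (n - k)" by simp
  then show ?thesis by simp
next
  case False
  assume "k \<le> Suc n"
  with False have "k = Suc n" by simp
  then show ?thesis by simp
qed

lemma pow_fix: "(of_nat ((n - k) choose Suc k) :: 'a::comm_ring_1) * a^(n - 2*k)
    = of_nat ((n - k) choose Suc k) * (a * a^(n - Suc (2*k)))"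
proof (cases "Suc (2*k) \<le> n")
  case True
  then have "n - 2*k = Suc (n - Suc (2*k))" by simp
  then show ?thesis by simp
next
  case False
  then have "n - k < Suc k" by simp
  then show ?thesis by (simp add: binomial_eq_0)
qed

lemma cheb_rec: "cheb a b (Suc (Suc n)) = a * cheb a b (Suc n) - b * cheb a b n"
proof -
  define P where "P k = (-1)^k * of_nat ((n - k) choose Suc k) * a^(n - 2*k) * b^(Suc k)" for k
  define Q where "Q k = (-1)^k * of_nat ((n - k) choose k) * a^(n - 2*k) * b^k" for k
  have L: "cheb a b (Suc (Suc n)) = a^(Suc (Suc n)) - (\<Sum>k\<le>Suc n. P k) - b * (\<Sum>k\<le>Suc n. Q k)"
  proof -
    have "cheb a b (Suc (Suc n)) = a^(Suc (Suc n)) +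
        (\<Sum>k\<le>Suc n. (-1)^(Suc k) * of_nat ((Suc n - k) choose Suc k) * a^(n - 2*k) * b^(Suc k))"
      unfolding cheb_def by (subst sum.atMost_Suc_shift) simp
    also have "(\<Sum>k\<le>Suc n. (-1)^(Suc k) * of_nat ((Suc n - k) choose Suc k) * a^(n - 2*k) * b^(Suc k))
        = (\<Sum>k\<le>Suc n. - P k - b * Q k)"
    proof (rule sum.cong[OF refl])
      fix k assume "k \<in> {..Suc n}"
      then have "((Suc n - k) choose Suc k) = ((n - k) choose Suc k) + ((n - k) choose k)"
        by (intro pascal') simp
      then show "(-1)^(Suc k) * of_nat ((Suc n - k) choose Suc k) * a^(n - 2*k) * b^(Suc k) = - P k - b * Q k"
        unfolding P_def Q_def by (simp add: algebra_simps)
    qed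
    also have "\<dots> = - (\<Sum>k\<le>Suc n. P k) - b * (\<Sum>k\<le>Suc n. Q k)"
      by (simp only: sum_subtractf sum_negf sum_distrib_left)
    finally show ?thesis by simp
  qed
  have P1: "(\<Sum>k\<le>Suc n. P k) = (\<Sum>k\<le>n. P k)" unfolding P_def by simp
  have Q1: "(\<Sum>k\<le>Suc n. Q k) = cheb a b n" unfolding Q_def cheb_def by simp
  have R: "a * cheb a b (Suc n) = a^(Suc (Suc n)) - (\<Sum>k\<le>n. P k)"
  proof -
    have "cheb a b (Suc n) = a^(Suc n) +
        (\<Sum>k\<le>n. (-1)^(Suc k) * of_nat ((n - k) choose Suc k) * a^(n - Suc (2*k)) * b^(Suc k))"
      unfolding cheb_def by (subst sum.atMost_Suc_shift) simp
    then have "a * cheb a b (Suc n) = a^(Suc (Suc n)) +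
        (\<Sum>k\<le>n. (-1)^(Suc k) * (of_nat ((n - k) choose Suc k) * (a * a^(n - Suc (2*k)))) * b^(Suc k))"
      by (simp add: sum_distrib_left algebra_simps)
    also have "(\<Sum>k\<le>n. (-1)^(Suc k) * (of_nat ((n - k) choose Suc k) * (a * a^(n - Suc (2*k)))) * b^(Suc k))
        = (\<Sum>k\<le>n. - P k)"
      unfolding P_def by (rule sum.cong[OF refl]) (simp only: pow_fix[symmetric], simp)
    finally show ?thesis by (simp add: sum_negf)
  qed
  show ?thesis using L P1 Q1 R by simp
qed

lemma Wn0: "Wn 0 = {[]}"
  unfolding Wn_def valid_def by auto

lemma Hs0: "Hs 0 C = 1"
proof -
  have "{t \<in> Wn 0. t = [] \<or> hd t \<in> C} = {[]}" using Wn0 by auto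
  then show ?thesis unfolding Hs_def by (simp add: cost_def)
qed

definition X :: "int poly" where "X = [:0, 1:]"

lemma mX: "monom (1::int) k = X ^ k"
  unfolding X_def by (simp add: monom_altdef)

lemma sum_UNIV_ty: "(\<Sum>c\<in>(UNIV::ty set). f c) = f (Hz True True) + f (Hz True False) + f (Hz False True) + f (Hz False False) + f Va + f Vb"
  by (simp add: ty_UNIV add.assoc)

lemma sum_compl_Va: "(\<Sum>c\<in>(- {Va}). f c) = f (Hz True True) + f (Hz True False) + f (Hz False True) + f (Hz False False) + f Vb"
proof -
  have "- {Va} = {Hz True True, Hz True False, Hz False True, Hz False False, Vb}"
    using ty_UNIV by auto
  then show ?thesis by (simp add: add.assoc)
qed

lemma H_Suc: "Hs (Suc n) UNIV = (2 * X^3 + 2 * X^2 + X) * Hs n UNIV + X * Hs n (- {Va})"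
  unfolding Hs_Suc sum_UNIV_ty by (simp add: G_def mX algebra_simps)

lemma HA_Suc: "Hs (Suc n) (- {Va}) = (2 * X^3 + 2 * X^2) * Hs n UNIV + X * Hs n (- {Va})"
  unfolding Hs_Suc sum_compl_Va by (simp add: G_def mX algebra_simps)

definition Apoly :: "int poly" where "Apoly = 2 * X + 2 * X^2 + 2 * X^3"

lemma H_rec: "Hs (Suc (Suc n)) UNIV = Apoly * Hs (Suc n) UNIV - X^2 * Hs n UNIV"
proof -
  have d: "Hs (Suc n) (- {Va}) = Hs (Suc n) UNIV - X * Hs n UNIV"
    using H_Suc[of n] HA_Suc[of n] by (simp add: algebra_simps)
  show ?thesis
    unfolding H_Suc[of "Suc n"] d Apoly_def by algebra
qed

lemma H_cheb: "Hs n UNIV = cheb Apoly (X^2) n"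
proof -
  have "Hs n UNIV = cheb Apoly (X^2) n \<and> Hs (Suc n) UNIV = cheb Apoly (X^2) (Suc n)"
  proof (induction n)
    case 0
    have "Hs (Suc 0) UNIV = Apoly"
      unfolding H_Suc Hs0 Apoly_def by algebra
    then show ?case by (simp add: Hs0 cheb0 cheb1)
  next
    case (Suc n)
    then show ?case by (simp add: H_rec cheb_rec)
  qed
  then show ?thesis by simp
qed


lemma Q_expand:
  assumes mn: "m \<le> n"
  shows "(1 + X + X^2)^m = (\<Sum>l = 0..2*n. \<Sum>j = (l + 1) div 2..l.
            of_int (int (m choose j) * int (j choose (l - j))) * X^l)"
proof -
  define g where "g j k = (of_nat (m choose j) * of_nat (j choose k) * X^(j+k) :: int poly)" for j k
  have b2: "(X + X^2)^j = (\<Sum>k\<le>j. of_nat (j choose k) * X^(j+k))" for j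
  proof -
    have "(X + X^2)^j = X^j * (X + 1)^j" by (simp add: power2_eq_square algebra_simps flip: power_mult_distrib)
    also have "(X + 1)^j = (\<Sum>k\<le>j. of_nat (j choose k) * X^k)"
      using binomial_ring[of X 1 j] by simp
    finally show ?thesis by (simp add: sum_distrib_left power_add algebra_simps)
  qed
  have "(1 + X + X^2)^m = (X + X^2 + 1)^m" by (simp add: algebra_simps)
  also have "\<dots> = (\<Sum>j\<le>m. of_nat (m choose j) * (X + X^2)^j)"
    using binomial_ring[of "X + X^2" 1 m] by simp
  also have "\<dots> = (\<Sum>j\<le>m. \<Sum>k\<le>j. g j k)"
    unfolding b2 g_def by (simp add: sum_distrib_left algebra_simps)
  also have "\<dots> = (\<Sum>(j, k)\<in>Sigma {..m} (\<lambda>j. {..j}). g j k)"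
    by (rule sum.Sigma) auto
  also have "\<dots> = (\<Sum>(j, k)\<in>{(j, k). j + k \<le> 2*n}. g j k)"
  proof (rule sum.mono_neutral_left)
    show "finite {(j, k). j + k \<le> 2*n}"
    proof (rule finite_subset)
      show "{(j, k). j + k \<le> 2*n} \<subseteq> {..2*n} \<times> {..2*n}" by auto
    qed simp
    show "Sigma {..m} (\<lambda>j. {..j}) \<subseteq> {(j, k). j + k \<le> 2*n}" using mn by auto
    show "\<forall>p\<in>{(j, k). j + k \<le> 2*n} - Sigma {..m} (\<lambda>j. {..j}). (case p of (j, k) \<Rightarrow> g j k) = 0"
      by (auto simp: g_def binomial_eq_0)
  qed
  also have "\<dots> = (\<Sum>l\<le>2*n. \<Sum>j\<le>l. g j (l - j))"
    by (rule sum.triangle_reindex_eq)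
  also have "\<dots> = (\<Sum>l = 0..2*n. \<Sum>j = (l + 1) div 2..l.
            of_int (int (m choose j) * int (j choose (l - j))) * X^l)"
  proof (rule sum.cong)
    show "{..2*n} = {0..2*n}" by auto
  next
    fix l assume "l \<in> {0..2*n}"
    show "(\<Sum>j\<le>l. g j (l - j)) = (\<Sum>j = (l + 1) div 2..l. of_int (int (m choose j) * int (j choose (l - j))) * X^l)"
    proof (rule sum.mono_neutral_cong_right)
      show "finite {..l}" by simp
      show "{(l + 1) div 2..l} \<subseteq> {..l}" by auto
      show "\<forall>j\<in>{..l} - {(l + 1) div 2..l}. g j (l - j) = 0"
      proof
        fix j assume "j \<in> {..l} - {(l + 1) div 2..l}"
        then have "j < l - j" by auto
        then show "g j (l - j) = 0" by (simp add: g_def binomial_eq_0)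
      qed
      show "\<And>j. j \<in> {(l + 1) div 2..l} \<Longrightarrow> g j (l - j) = of_int (int (m choose j) * int (j choose (l - j))) * X^l"
        by (auto simp: g_def)
    qed
  qed
  finally show ?thesis .
qed

definition c0 :: "nat \<Rightarrow> nat \<Rightarrow> int" where
  "c0 n i = (-1) ^ (n - i) * 2 ^ (2*i - n) * int (i choose (2*i - n))"

lemma cheb_form:
  "cheb Apoly (X^2) n = X^n * (\<Sum>i = (n + 1) div 2..n. of_int (c0 n i) * (1 + X + X^2)^(2*i - n))"
proof -
  let ?Q = "1 + X + X^2"
  define g where "g k = (-1)^k * of_nat ((n - k) choose k) * Apoly^(n - 2*k) * (X^2)^k" for k
  have "cheb Apoly (X^2) n = (\<Sum>k\<le>n. g k)" unfolding cheb_def g_def by simp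
  also have "\<dots> = (\<Sum>i\<le>n. g (n - i))"
    using sum.nat_diff_reindex[of "\<lambda>i. g i" "Suc n"] by (simp add: lessThan_Suc_atMost)
  also have "\<dots> = (\<Sum>i = (n + 1) div 2..n. g (n - i))"
  proof (rule sum.mono_neutral_right)
    show "finite {..n}" by simp
    show "{(n + 1) div 2..n} \<subseteq> {..n}" by auto
    show "\<forall>i\<in>{..n} - {(n + 1) div 2..n}. g (n - i) = 0"
    proof
      fix i assume "i \<in> {..n} - {(n + 1) div 2..n}"
      then have "n - (n - i) < n - i" "i \<le> n" by auto
      then show "g (n - i) = 0" unfolding g_def by (simp add: binomial_eq_0)
    qed
  qed
  also have "\<dots> = (\<Sum>i = (n + 1) div 2..n. X^n * (of_int (c0 n i) * ?Q^(2*i - n)))"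
  proof (rule sum.cong[OF refl])
    fix i assume i: "i \<in> {(n + 1) div 2..n}"
    then have in1: "i \<le> n" "n \<le> 2*i" by auto
    have e1: "n - (n - i) = i" "n - 2*(n - i) = 2*i - n" using in1 by auto
    have e2: "i choose (n - i) = i choose (2*i - n)"
    proof -
      have "n - i \<le> i" using in1 by simp
      then have "i choose (n - i) = i choose (i - (n - i))" by (rule binomial_symmetric)
      moreover have "i - (n - i) = 2*i - n" using in1 by simp
      ultimately show ?thesis by simp
    qed
    have A: "Apoly = 2 * X * ?Q" unfolding Apoly_def by algebra
    have e3: "Apoly^(2*i - n) * (X^2)^(n - i) = 2^(2*i - n) * X^n * ?Q^(2*i - n)"
    proof -
      have p1: "Apoly^(2*i - n) = 2^(2*i - n) * X^(2*i - n) * ?Q^(2*i - n)"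
        unfolding A by (simp only: power_mult_distrib)
      have p2: "(X^2)^(n - i) = X^(2*(n - i))" by (simp only: power_mult)
      have "Apoly^(2*i - n) * (X^2)^(n - i) = 2^(2*i - n) * ?Q^(2*i - n) * (X^(2*i - n) * X^(2*(n - i)))"
        unfolding p1 p2 by (simp only: mult_ac)
      also have "X^(2*i - n) * X^(2*(n - i)) = X^n"
        unfolding power_add[symmetric] using in1 by (simp add: algebra_simps)
      finally show ?thesis by (simp add: algebra_simps)
    qed
    have oc: "(of_int (c0 n i) :: int poly) = (-1)^(n - i) * 2^(2*i - n) * of_nat (i choose (2*i - n))"
      unfolding c0_def by simp
    have "g (n - i) = (-1)^(n - i) * of_nat (i choose (2*i - n)) * (Apoly^(2*i - n) * (X^2)^(n - i))"
      unfolding g_def e1 e2 by (simp only: mult.assoc)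
    also have "\<dots> = (-1)^(n - i) * of_nat (i choose (2*i - n)) * (2^(2*i - n) * X^n * ?Q^(2*i - n))"
      by (simp only: e3)
    also have "\<dots> = X^n * (of_int (c0 n i) * ?Q^(2*i - n))"
      unfolding oc by (simp only: mult_ac)
    finally show "g (n - i) = X^n * (of_int (c0 n i) * ?Q^(2*i - n))" .
  qed
  also have "\<dots> = X^n * (\<Sum>i = (n + 1) div 2..n. of_int (c0 n i) * ?Q^(2*i - n))"
    by (simp add: sum_distrib_left)
  finally show ?thesis .
qed

lemma sm: "smult (c::int) (monom 1 l) = of_int c * X^l"
  by (simp add: mX of_int_poly)

lemma lo_ge_h: "((n::nat) + 1) div 2 \<le> (l + 2*n + 3) div 4"
  by presburger

lemma below_lo: "(i::nat) < (l + 2*n + 3) div 4 \<Longrightarrow> 4 * i + 1 \<le> l + 2*n"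
  by presburger

lemma rhs_form:
  "monom 1 n * (\<Sum>l = 0..2*n. \<Sum>i = (l + 2*n + 3) div 4..n. \<Sum>j = (l + 1) div 2..l.
       smult ((-1) ^ (n - i) * 2 ^ (2*i - n) * int (i choose (2*i - n))
              * int ((2*i - n) choose j) * int (j choose (l - j))) (monom 1 l))
   = X^n * (\<Sum>i = (n + 1) div 2..n. of_int (c0 n i) * (1 + X + X^2)^(2*i - n))"
proof -
  let ?h = "(n + 1) div 2"
  define F where "F i l j = of_int (c0 n i) * (of_int (int ((2*i - n) choose j) * int (j choose (l - j))) * X^l)" for i l j
  have t: "smult ((-1) ^ (n - i) * 2 ^ (2*i - n) * int (i choose (2*i - n))
              * int ((2*i - n) choose j) * int (j choose (l - j))) (monom 1 l) = F i l j" for i l j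
    unfolding sm F_def c0_def by (simp only: of_int_mult mult.assoc)
  have "(\<Sum>l = 0..2*n. \<Sum>i = (l + 2*n + 3) div 4..n. \<Sum>j = (l + 1) div 2..l.
       smult ((-1) ^ (n - i) * 2 ^ (2*i - n) * int (i choose (2*i - n))
              * int ((2*i - n) choose j) * int (j choose (l - j))) (monom 1 l))
     = (\<Sum>l = 0..2*n. \<Sum>i = (l + 2*n + 3) div 4..n. \<Sum>j = (l + 1) div 2..l. F i l j)"
    unfolding t ..
  also have "\<dots> = (\<Sum>l = 0..2*n. \<Sum>i = ?h..n. \<Sum>j = (l + 1) div 2..l. F i l j)"
  proof (rule sum.cong[OF refl])
    fix l assume "l \<in> {0..2*n}"
    show "(\<Sum>i = (l + 2*n + 3) div 4..n. \<Sum>j = (l + 1) div 2..l. F i l j) = (\<Sum>i = ?h..n. \<Sum>j = (l + 1) div 2..l. F i l j)"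
    proof (rule sum.mono_neutral_left)
      show "finite {?h..n}" by simp
      show "{(l + 2*n + 3) div 4..n} \<subseteq> {?h..n}" using lo_ge_h[of n l] by auto
      show "\<forall>i\<in>{?h..n} - {(l + 2*n + 3) div 4..n}. (\<Sum>j = (l + 1) div 2..l. F i l j) = 0"
      proof
        fix i assume i: "i \<in> {?h..n} - {(l + 2*n + 3) div 4..n}"
        then have i1: "n \<le> 2*i" "i < (l + 2*n + 3) div 4" by auto
        then have i2: "2 * (2*i - n) < l" using below_lo[of i l n] by linarith
        show "(\<Sum>j = (l + 1) div 2..l. F i l j) = 0"
        proof (rule sum.neutral, rule ballI)
          fix j assume j: "j \<in> {(l + 1) div 2..l}"
          show "F i l j = 0"
          proof (cases "2*i - n < j")
            case True
            then show ?thesis by (simp add: F_def binomial_eq_0)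
          next
            case False
            then have "j < l - j" using i2 j by auto
            then show ?thesis by (simp add: F_def binomial_eq_0)
          qed
        qed
      qed
    qed
  qed
  also have "\<dots> = (\<Sum>i = ?h..n. \<Sum>l = 0..2*n. \<Sum>j = (l + 1) div 2..l. F i l j)"
    by (rule sum.swap)
  also have "\<dots> = (\<Sum>i = ?h..n. of_int (c0 n i) * (1 + X + X^2)^(2*i - n))"
  proof (rule sum.cong[OF refl])
    fix i assume i: "i \<in> {?h..n}"
    then have m: "2*i - n \<le> n" by auto
    show "(\<Sum>l = 0..2*n. \<Sum>j = (l + 1) div 2..l. F i l j) = of_int (c0 n i) * (1 + X + X^2)^(2*i - n)"
      unfolding F_def by (simp only: Q_expand[OF m] sum_distrib_left)
  qed
  finally show ?thesis by (simp add: mX)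
qed


lemma af_empty: "anti_forcing_poly {} ({} :: 'a set set) = 1"
proof -
  have pm: "{M. perfect_matching {} ({} :: 'a set set) M} = {{}}"
    unfolding perfect_matching_def by auto
  have af: "anti_forcing_number {} ({} :: 'a set set) {} = 0"
    unfolding anti_forcing_number_def
  proof (rule Least_equality)
    show "\<exists>S. anti_forcing_set {} ({} :: 'a set set) {} S \<and> finite S \<and> card S = 0"
      by (rule exI[of _ "{}"]) (auto simp: anti_forcing_set_def perfect_matching_def)
  qed simp
  show ?thesis unfolding anti_forcing_poly_def pm using af by simp
qed

theorem theorem4p2:
  fixes n :: nat
  shows "anti_forcing_poly (pyrene_vertices n) (pyrene_edges n) =
    monom 1 n * (\<Sum>l = 0..2*n. \<Sum>i = (l + 2*n + 3) div 4..n. \<Sum>j = (l + 1) div 2..l.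
       smult ((-1) ^ (n - i) * 2 ^ (2*i - n) * int (i choose (2*i - n))
              * int ((2*i - n) choose j) * int (j choose (l - j))) (monom 1 l))"
proof (cases "n = 0")
  case True
  have e: "pyrene_edges 0 = {}" unfolding pyrene_edges_def pyrene_hexagons_def by simp
  have v: "pyrene_vertices 0 = {}" unfolding pyrene_vertices_def e by simp
  show ?thesis using True by (simp add: e v af_empty)
next
  case False
  then have n: "n \<ge> 1" by simp
  have "anti_forcing_poly (pyrene_vertices n) (pyrene_edges n) = anti_forcing_poly (AV n) (AE n)"
    unfolding pyrene_vertices_iso[OF n] pyrene_edges_iso[OF n] by (rule afpoly_image[OF inj_vtx])
  also have "\<dots> = (\<Sum>t\<in>Wn n. monom 1 (cost t))" by (rule afpoly_words)
  also have "\<dots> = Hs n UNIV" unfolding Hs_def by simp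
  also have "\<dots> = cheb Apoly (X^2) n" by (rule H_cheb)
  also have "\<dots> = X^n * (\<Sum>i = (n + 1) div 2..n. of_int (c0 n i) * (1 + X + X^2)^(2*i - n))" by (rule cheb_form)
  also have "\<dots> = monom 1 n * (\<Sum>l = 0..2*n. \<Sum>i = (l + 2*n + 3) div 4..n. \<Sum>j = (l + 1) div 2..l.
       smult ((-1) ^ (n - i) * 2 ^ (2*i - n) * int (i choose (2*i - n))
              * int ((2*i - n) choose j) * int (j choose (l - j))) (monom 1 l))"
    by (rule rhs_form[symmetric])
  finally show ?thesis .
qed


end
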